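(* Let $X$ be a non-empty finite set and $\mathcal{P}$ a partition of $X$ such that $\mathcal{P}$ has exactly $m_i\ge 2$ blocks of size $n_i\ge 2$ for $i=1,\dots,p$ (the $n_i$ pairwise distinct), exactly one block of each of the sizes $l_1,\dots,l_q$ with each $l_i\ge 2$ (these sizes distinct from each other and from the $n_i$), and $t$ singleton blocks, and no other blocks ($p,q,t$ may be $0$). Then $$\operatorname{rank}(\Sigma(X,\mathcal{P}):S(X,\mathcal{P}))=p+q+g'(t)-1+l,$$ where $g'(0)=0$ and $g'(t)=1$ for $t\ge 1$, and $l$ is the number of values $s\ge 2$ such that $\mathcal{P}$ has a block of size $s$ but no block of size $s-1$.
   Context: $T(X,\mathcal{P})$ is the semigroup (under composition) of maps $f:X\to X$ such that for every block $P$ there is a block $Q$ with $Pf\subseteq Q$; $S(X,\mathcal{P})$ is its group of units (bijections in $T(X,\mathcal{P})$); $\Sigma(X,\mathcal{P})$ is the subsemigroup of $f\in T(X,\mathcal{P})$ whose image intersects every block. For a subsemigroup $U$ of a semigroup $V$, $\operatorname{rank}(V:U)$ is the least cardinality of a subset $W\subseteq V$ such that $U\cup W$ generates $V$ as a semigroup. *)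

theory Defs
  imports "HOL-Library.FuncSet" "HOL-Library.Disjoint_Sets"
begin

text \<open>Maps X -> X are represented as extensional functions (value undefined outside X),
  composed with compose X.\<close>

definition Tpart :: "'a set \<Rightarrow> 'a set set \<Rightarrow> ('a \<Rightarrow> 'a) set" where
  "Tpart X P = {f \<in> X \<rightarrow>\<^sub>E X. \<forall>B\<in>P. \<exists>C\<in>P. f ` B \<subseteq> C}"

definition Spart :: "'a set \<Rightarrow> 'a set set \<Rightarrow> ('a \<Rightarrow> 'a) set" where
  "Spart X P = {f \<in> Tpart X P. bij_betw f X X}"

definition Sigmapart :: "'a set \<Rightarrow> 'a set set \<Rightarrow> ('a \<Rightarrow> 'a) set" where
  "Sigmapart X P = {f \<in> Tpart X P. \<forall>B\<in>P. f ` X \<inter> B \<noteq> {}}"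

inductive_set gen_sg :: "'a set \<Rightarrow> ('a \<Rightarrow> 'a) set \<Rightarrow> ('a \<Rightarrow> 'a) set"
  for X :: "'a set" and W :: "('a \<Rightarrow> 'a) set" where
  base: "w \<in> W \<Longrightarrow> w \<in> gen_sg X W"
| comp: "a \<in> gen_sg X W \<Longrightarrow> b \<in> gen_sg X W \<Longrightarrow> compose X a b \<in> gen_sg X W"

definition rel_rank :: "'a set \<Rightarrow> ('a \<Rightarrow> 'a) set \<Rightarrow> ('a \<Rightarrow> 'a) set \<Rightarrow> nat" where
  "rel_rank X V U = (LEAST n. \<exists>W. W \<subseteq> V \<and> finite W \<and> card W = n \<and> gen_sg X (U \<union> W) = V)"

end

theory Submission
  imports Defs
begin

locale PT =
  fixes X :: "'a set" and P :: "'a set set"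
  assumes finX: "finite X" and part: "partition_on X P"
begin

definition blk :: "'a \<Rightarrow> 'a set" where "blk x = (THE B. B \<in> P \<and> x \<in> B)"
definition bs :: "'a \<Rightarrow> nat" where "bs x = card (blk x)"
definition los :: "('a \<Rightarrow> 'a) \<Rightarrow> nat" where "los f = card X - card (f ` X)"

lemma P_union: "\<Union>P = X" using part by (simp add: partition_on_def)
lemma P_disj: "B \<in> P \<Longrightarrow> C \<in> P \<Longrightarrow> B \<noteq> C \<Longrightarrow> B \<inter> C = {}"
  using part unfolding partition_on_def disjoint_def by blast
lemma P_ne: "B \<in> P \<Longrightarrow> B \<noteq> {}" using part by (auto simp: partition_on_def)
lemma P_sub: "B \<in> P \<Longrightarrow> B \<subseteq> X" using P_union by blast
lemma P_fin: "B \<in> P \<Longrightarrow> finite B" using P_sub finX finite_subset by blast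
lemma finP: "finite P" using finite_elements[OF finX part] .

lemma blk_eq: "B \<in> P \<Longrightarrow> x \<in> B \<Longrightarrow> blk x = B"
  unfolding blk_def
  apply (rule the_equality) using P_disj by auto

lemma blk_in: "x \<in> X \<Longrightarrow> blk x \<in> P \<and> x \<in> blk x"
proof -
  assume "x \<in> X" then obtain B where "B \<in> P" "x \<in> B" using P_union by blast
  thus ?thesis using blk_eq by simp
qed

lemma blkP: "x \<in> X \<Longrightarrow> blk x \<in> P" using blk_in by blast
lemma blk_self: "x \<in> X \<Longrightarrow> x \<in> blk x" using blk_in by blast
lemma blk_sub: "x \<in> X \<Longrightarrow> blk x \<subseteq> X" using blkP P_sub by blast

lemma tpart_blk:
  assumes "f \<in> Tpart X P" "x \<in> X" "y \<in> blk x"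
  shows "f y \<in> blk (f x)"
proof -
  obtain C where C: "C \<in> P" "f ` blk x \<subseteq> C" using assms blkP unfolding Tpart_def by blast
  have "f x \<in> C" using C blk_self assms by blast
  hence "blk (f x) = C" using blk_eq C by simp
  thus ?thesis using C assms by blast
qed

lemma tpart_X: "f \<in> Tpart X P \<Longrightarrow> x \<in> X \<Longrightarrow> f x \<in> X"
  unfolding Tpart_def by auto

lemma card_img_le: "Z \<subseteq> X \<Longrightarrow> f ` X \<subseteq> X \<Longrightarrow> card (f ` X) + card Z \<le> card (f ` Z) + card X"
proof -
  assume Z: "Z \<subseteq> X" and fX: "f ` X \<subseteq> X"
  have "f ` X \<subseteq> f ` Z \<union> f ` (X - Z)" by blast
  hence "card (f ` X) \<le> card (f ` Z \<union> f ` (X - Z))"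
    by (intro card_mono) (use finX Z in \<open>auto intro: finite_subset\<close>)
  also have "\<dots> \<le> card (f ` Z) + card (f ` (X - Z))" by (rule card_Un_le)
  also have "card (f ` (X - Z)) \<le> card (X - Z)" by (rule card_image_le) (use finX in auto)
  also have "card (X - Z) = card X - card Z" using Z finX by (simp add: card_Diff_subset finite_subset)
  finally show ?thesis using card_mono[OF finX Z] by linarith
qed

lemma S_T: "f \<in> Spart X P \<Longrightarrow> f \<in> Tpart X P" by (simp add: Spart_def)
lemma Sig_T: "f \<in> Sigmapart X P \<Longrightarrow> f \<in> Tpart X P" by (simp add: Sigmapart_def)

lemma bs_mono_inj:
  assumes "f \<in> Tpart X P" "inj_on f X" "x \<in> X"
  shows "bs x \<le> bs (f x)"
proof -
  have "f ` blk x \<subseteq> blk (f x)" using tpart_blk assms by blast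
  moreover have "card (f ` blk x) = card (blk x)"
    using assms blk_sub by (meson card_image inj_on_subset)
  moreover have "finite (blk (f x))" using P_fin blkP tpart_X assms(1,3) by blast
  ultimately show ?thesis unfolding bs_def using card_mono by metis
qed

lemma S_bs:
  assumes "f \<in> Spart X P" "x \<in> X"
  shows "bs (f x) = bs x"
proof -
  have T: "f \<in> Tpart X P" and inj: "inj_on f X" using assms
    by (auto simp: Spart_def bij_betw_def)
  have mono: "\<And>z. z \<in> X \<Longrightarrow> bs z \<le> bs (f z)" using bs_mono_inj T inj by blast
  define U where "U = {z \<in> X. bs x + 1 \<le> bs z}"
  have "f ` U \<subseteq> U" unfolding U_def using mono tpart_X[OF T] by force
  moreover have "finite U" unfolding U_def using finX by simp
  moreover have "inj_on f U" using inj unfolding U_def by (rule inj_on_subset) auto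
  ultimately have eq: "f ` U = U" using endo_inj_surj by blast
  show ?thesis
  proof (rule ccontr)
    assume "bs (f x) \<noteq> bs x"
    hence "f x \<in> U" using mono[OF assms(2)] tpart_X[OF T assms(2)] unfolding U_def by simp
    then obtain z where "z \<in> U" "f z = f x" using eq by (metis imageE)
    hence "z = x" using inj assms(2) unfolding U_def by (auto dest: inj_onD)
    thus False using \<open>z \<in> U\<close> unfolding U_def by simp
  qed
qed

lemma Sig_meets: "f \<in> Sigmapart X P \<Longrightarrow> B \<in> P \<Longrightarrow> \<exists>x\<in>X. f x \<in> B"
  unfolding Sigmapart_def by blast

lemma Sig_blocks_inj:
  assumes f: "f \<in> Sigmapart X P" and B: "B \<in> P" "x \<in> B" and C: "C \<in> P" "y \<in> C"
    and eq: "blk (f x) = blk (f y)"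
  shows "B = C"
proof -
  have T: "f \<in> Tpart X P" using f Sig_T by blast
  define \<phi> where "\<phi> D = blk (f (SOME z. z \<in> D))" for D
  have phi: "\<phi> D = blk (f z)" if "D \<in> P" "z \<in> D" for D z
  proof -
    define s where "s = (SOME z. z \<in> D)"
    have s: "s \<in> D" using that unfolding s_def by (meson someI)
    have sX: "s \<in> X" and zX: "z \<in> X" using s that P_sub by auto
    have "blk s = D" using blk_eq that s by auto
    hence "z \<in> blk s" using that by simp
    hence "f z \<in> blk (f s)" using tpart_blk[OF T sX] by blast
    hence "blk (f z) = blk (f s)" using blk_eq[OF blkP[OF tpart_X[OF T sX]]] by blast
    thus ?thesis unfolding \<phi>_def s_def by simp
  qed
  have "\<phi> ` P = P"
  proof
    show "\<phi> ` P \<subseteq> P"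
    proof
      fix E assume "E \<in> \<phi> ` P"
      then obtain D where D: "D \<in> P" "E = \<phi> D" by blast
      obtain z where z: "z \<in> D" using P_ne D by blast
      have "z \<in> X" using z D P_sub by blast
      thus "E \<in> P" using D z phi blkP tpart_X[OF T] by simp
    qed
    show "P \<subseteq> \<phi> ` P"
    proof
      fix E assume E: "E \<in> P"
      then obtain z where z: "z \<in> X" "f z \<in> E" using Sig_meets f by blast
      have "\<phi> (blk z) = blk (f z)" using phi blk_in z by blast
      also have "\<dots> = E" using blk_eq E z by blast
      finally show "E \<in> \<phi> ` P" using blkP z by (metis imageI)
    qed
  qed
  hence "inj_on \<phi> P" using eq_card_imp_inj_on finP by metis
  moreover have "\<phi> B = \<phi> C" using phi B C eq by simp
  ultimately show ?thesis using B C by (meson inj_onD)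
qed

lemma S_Sig: "f \<in> Spart X P \<Longrightarrow> f \<in> Sigmapart X P"
proof -
  assume f: "f \<in> Spart X P"
  hence "f ` X = X" by (simp add: Spart_def bij_betw_def)
  moreover have "\<forall>B\<in>P. X \<inter> B \<noteq> {}" using P_ne P_sub by blast
  ultimately show ?thesis using f unfolding Spart_def Sigmapart_def by simp
qed

lemma T_ext: "f \<in> Tpart X P \<Longrightarrow> f \<in> X \<rightarrow>\<^sub>E X" by (simp add: Tpart_def)

lemma compose_ext: "a \<in> X \<rightarrow>\<^sub>E X \<Longrightarrow> b \<in> X \<rightarrow>\<^sub>E X \<Longrightarrow> compose X a b \<in> X \<rightarrow>\<^sub>E X"
  unfolding compose_def by (auto simp: PiE_def Pi_def extensional_def)

lemma compose_Sig:
  assumes a: "a \<in> Sigmapart X P" and b: "b \<in> Sigmapart X P"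
  shows "compose X a b \<in> Sigmapart X P"
proof -
  have Ta: "a \<in> Tpart X P" and Tb: "b \<in> Tpart X P" using a b Sig_T by auto
  have ext: "compose X a b \<in> X \<rightarrow>\<^sub>E X"
    using T_ext[OF Ta] T_ext[OF Tb] compose_ext by blast
  have T: "compose X a b \<in> Tpart X P"
    unfolding Tpart_def
  proof (intro CollectI conjI ext ballI)
    fix B assume B: "B \<in> P"
    then obtain x where x: "x \<in> B" using P_ne by blast
    have xX: "x \<in> X" using x B P_sub by blast
    have bxX: "b x \<in> X" using tpart_X[OF Tb xX] .
    have abxX: "a (b x) \<in> X" using tpart_X[OF Ta bxX] .
    have "compose X a b ` B \<subseteq> blk (a (b x))"
    proof
      fix z assume "z \<in> compose X a b ` B"
      then obtain y where y: "y \<in> B" "z = compose X a b y" by blast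
      have yX: "y \<in> X" using y B P_sub by blast
      have z: "z = a (b y)" using y yX by (simp add: compose_def)
      have "y \<in> blk x" using blk_eq B x y by simp
      hence "b y \<in> blk (b x)" using tpart_blk[OF Tb xX] by blast
      thus "z \<in> blk (a (b x))" using tpart_blk[OF Ta bxX] z by blast
    qed
    thus "\<exists>C\<in>P. compose X a b ` B \<subseteq> C" using blkP[OF abxX] by blast
  qed
  show ?thesis unfolding Sigmapart_def
  proof (intro CollectI conjI T ballI)
    fix C assume C: "C \<in> P"
    then obtain x where x: "x \<in> X" "a x \<in> C" using Sig_meets a by blast
    obtain y where y: "y \<in> X" "b y \<in> blk x" using Sig_meets[OF b blkP[OF x(1)]] by blast
    have "a (b y) \<in> blk (a x)" using tpart_blk[OF Ta x(1) y(2)] .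
    hence "a (b y) \<in> C" using blk_eq C x by simp
    hence "compose X a b y \<in> C" using y by (simp add: compose_def)
    thus "compose X a b ` X \<inter> C \<noteq> {}" using y by blast
  qed
qed

lemma gen_sub:
  assumes "U \<subseteq> Sigmapart X P" shows "gen_sg X U \<subseteq> Sigmapart X P"
proof
  fix f assume "f \<in> gen_sg X U" thus "f \<in> Sigmapart X P"
    by induction (use assms compose_Sig in auto)
qed

lemma los_comp:
  assumes "a \<in> X \<rightarrow>\<^sub>E X" "b \<in> X \<rightarrow>\<^sub>E X"
  shows "los a \<le> los (compose X a b)" "los b \<le> los (compose X a b)"
proof -
  have img: "compose X a b ` X = a ` (b ` X)" by (auto simp: compose_def)
  have bX: "b ` X \<subseteq> X" using assms by auto
  have "card (a ` (b ` X)) \<le> card (a ` X)" using bX finX by (intro card_mono) auto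
  thus "los a \<le> los (compose X a b)" unfolding los_def img by linarith
  have "card (a ` (b ` X)) \<le> card (b ` X)" using finX by (intro card_image_le) auto
  thus "los b \<le> los (compose X a b)" unfolding los_def img by linarith
qed


definition Kp :: "nat \<Rightarrow> ('a \<Rightarrow> 'a) \<Rightarrow> bool" where
  "Kp s f = (\<exists>x\<in>X. \<exists>y\<in>X. x \<noteq> y \<and> f x = f y \<and> bs x = s \<and> bs y = s)"
definition Cr :: "nat \<Rightarrow> ('a \<Rightarrow> 'a) \<Rightarrow> bool" where
  "Cr b f = (\<exists>x\<in>X. b \<le> bs x \<and> bs (f x) < b)"

lemma img_rm: "a \<in> A \<Longrightarrow> a' \<in> A \<Longrightarrow> a' \<noteq> a \<Longrightarrow> f a' = f a \<Longrightarrow> f ` A = f ` (A - {a})"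
proof
  assume h: "a \<in> A" "a' \<in> A" "a' \<noteq> a" "f a' = f a"
  show "f ` A \<subseteq> f ` (A - {a})"
  proof
    fix z assume "z \<in> f ` A"
    then obtain t where t: "t \<in> A" "z = f t" by blast
    show "z \<in> f ` (A - {a})"
    proof (cases "t = a")
      case True thus ?thesis using h t by (metis DiffI image_eqI singletonD)
    next
      case False thus ?thesis using t by blast
    qed
  qed
qed auto

lemma two_pairs:
  assumes fX: "f ` X \<subseteq> X" and xy: "x \<in> X" "y \<in> X" "x \<noteq> y" "f x = f y"
    and uv: "u \<in> X" "v \<in> X" "u \<noteq> v" "f u = f v" and ne: "{x, y} \<noteq> {u, v}"
  shows "card (f ` X) + 2 \<le> card X"
proof -
  define A where "A = X - {v}"
  have e1: "f ` X = f ` A" unfolding A_def using img_rm[of v X u f] uv by simp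
  obtain w w' where w: "w \<in> A" "w' \<in> A" "w' \<noteq> w" "f w' = f w"
  proof (cases "v = x")
    case True
    hence "u \<noteq> y" using ne uv by auto
    moreover have "y \<noteq> v" using True xy by auto
    ultimately show ?thesis using that[of y u] xy uv True unfolding A_def by auto
  next
    case F1: False
    show ?thesis
    proof (cases "v = y")
      case True
      hence "u \<noteq> x" using ne uv by auto
      thus ?thesis using that[of x u] xy uv True F1 unfolding A_def by auto
    next
      case False
      thus ?thesis using that[of y x] xy uv F1 unfolding A_def by auto
    qed
  qed
  have "f ` X = f ` (A - {w})" using e1 img_rm[OF w] by simp
  moreover have "card (f ` (A - {w})) \<le> card (A - {w})" using finX A_def by (intro card_image_le) auto
  moreover have "card (A - {w}) + 2 = card X"
  proof -
    have "card A + 1 = card X" unfolding A_def using uv finX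
      by (metis Suc_eq_plus1 card.remove)
    moreover have "card (A - {w}) + 1 = card A" using w finX A_def
      by (metis Suc_eq_plus1 card.remove finite_Diff)
    ultimately show ?thesis by simp
  qed
  ultimately show ?thesis by simp
qed

lemma gen_ext: "gen_sg X (Spart X P \<union> W) = Sigmapart X P \<Longrightarrow> f \<in> gen_sg X (Spart X P \<union> W) \<Longrightarrow> f \<in> X \<rightarrow>\<^sub>E X"
  using Sig_T T_ext by blast

lemma Sig_inj_S: "f \<in> Sigmapart X P \<Longrightarrow> inj_on f X \<Longrightarrow> f \<in> Spart X P"
proof -
  assume f: "f \<in> Sigmapart X P" and inj: "inj_on f X"
  have "f ` X \<subseteq> X" using tpart_X Sig_T f by blast
  hence "f ` X = X" using endo_inj_surj finX inj by blast
  thus ?thesis using f inj unfolding Spart_def Sigmapart_def bij_betw_def by simp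
qed

lemma K_ind:
  assumes gen: "gen_sg X (Spart X P \<union> W) = Sigmapart X P"
    and f: "f \<in> gen_sg X (Spart X P \<union> W)"
  shows "los f \<le> 1 \<Longrightarrow> Kp s f \<Longrightarrow> \<exists>w\<in>W. los w \<le> 1 \<and> Kp s w"
  using f
proof (induction arbitrary: s)
  case (base w)
  show ?case
  proof (cases "w \<in> W")
    case True thus ?thesis using base by blast
  next
    case False
    hence "inj_on w X" using base by (auto simp: Spart_def bij_betw_def)
    thus ?thesis using base by (auto simp: Kp_def dest: inj_onD)
  qed
next
  case (comp a b)
  have ae: "a \<in> X \<rightarrow>\<^sub>E X" and be: "b \<in> X \<rightarrow>\<^sub>E X" using gen_ext[OF gen] comp by auto
  have la: "los a \<le> 1" and lb: "los b \<le> 1" using los_comp[OF ae be] comp by auto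
  obtain x y where xy: "x \<in> X" "y \<in> X" "x \<noteq> y" "a (b x) = a (b y)" "bs x = s" "bs y = s"
    using comp(6) by (auto simp: Kp_def compose_def)
  show ?case
  proof (cases "b x = b y")
    case True
    hence "Kp s b" using xy unfolding Kp_def by blast
    thus ?thesis using comp lb by blast
  next
    case False
    show ?thesis
    proof (cases "inj_on b X")
      case True
      have "b \<in> Sigmapart X P" using gen comp by blast
      hence bS: "b \<in> Spart X P" using Sig_inj_S True by blast
      have "Kp s a" unfolding Kp_def
        using xy False S_bs[OF bS] be by (intro bexI[of _ "b x"] bexI[of _ "b y"]) auto
      thus ?thesis using comp la by blast
    next
      case nI: False
      then obtain u v where uv: "u \<in> X" "v \<in> X" "u \<noteq> v" "b u = b v" unfolding inj_on_def by blast
      let ?f = "compose X a b"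
      have "?f ` X \<subseteq> X" using compose_ext[OF ae be] by auto
      moreover have "?f x = ?f y" "?f u = ?f v" using xy uv by (auto simp: compose_def)
      moreover have "{x, y} \<noteq> {u, v}" using False uv by (auto simp: doubleton_eq_iff)
      ultimately have "card (?f ` X) + 2 \<le> card X" using two_pairs xy uv by blast
      hence False using comp(5) unfolding los_def by linarith
      thus ?thesis ..
    qed
  qed
qed

lemma Cr_ind:
  assumes gen: "gen_sg X (Spart X P \<union> W) = Sigmapart X P"
    and f: "f \<in> gen_sg X (Spart X P \<union> W)"
  shows "Cr b f \<Longrightarrow> \<exists>w\<in>W. Cr b w \<and> los w \<le> los f"
  using f
proof (induction)
  case (base w)
  show ?case
  proof (cases "w \<in> W")
    case True thus ?thesis using base by blast
  next
    case False
    hence "w \<in> Spart X P" using base by blast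
    thus ?thesis using base S_bs by (auto simp: Cr_def)
  qed
next
  case (comp a1 b1)
  have ae: "a1 \<in> X \<rightarrow>\<^sub>E X" and be: "b1 \<in> X \<rightarrow>\<^sub>E X" using gen_ext[OF gen] comp by auto
  note lc = los_comp[OF ae be]
  obtain x where x: "x \<in> X" "b \<le> bs x" "bs (a1 (b1 x)) < b"
    using comp(5) by (auto simp: Cr_def compose_def)
  show ?case
  proof (cases "bs (b1 x) < b")
    case True
    hence "Cr b b1" using x unfolding Cr_def by blast
    thus ?thesis using comp lc by fastforce
  next
    case False
    hence "Cr b a1" using x be unfolding Cr_def by (intro bexI[of _ "b1 x"]) auto
    thus ?thesis using comp lc by fastforce
  qed
qed


lemma mkSig:
  assumes "f \<in> X \<rightarrow>\<^sub>E X" "\<And>D. D \<in> P \<Longrightarrow> \<exists>E\<in>P. f ` D \<subseteq> E" "\<And>D. D \<in> P \<Longrightarrow> \<exists>x\<in>X. f x \<in> D"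
  shows "f \<in> Sigmapart X P"
proof -
  have T: "f \<in> Tpart X P" unfolding Tpart_def using assms(1,2) by simp
  have "\<forall>D\<in>P. f ` X \<inter> D \<noteq> {}" using assms(3) by blast
  thus ?thesis unfolding Sigmapart_def using T by simp
qed

definition ecol :: "'a \<Rightarrow> 'a \<Rightarrow> 'a \<Rightarrow> 'a" where
  "ecol x y = restrict (\<lambda>z. if z = x then y else z) X"
definition sw :: "'a set \<Rightarrow> 'a set \<Rightarrow> ('a \<Rightarrow> 'a) \<Rightarrow> ('a \<Rightarrow> 'a) \<Rightarrow> 'a \<Rightarrow> 'a" where
  "sw B C u v = restrict (\<lambda>z. if z \<in> B then u z else if z \<in> C then v z else z) X"
definition StdSw :: "'a set \<Rightarrow> 'a set \<Rightarrow> ('a \<Rightarrow> 'a) \<Rightarrow> bool" where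
  "StdSw B C f = (B \<in> P \<and> C \<in> P \<and> B \<noteq> C \<and> (\<exists>\<rho> \<iota>. f = sw B C \<rho> \<iota> \<and> \<rho> ` B = C \<and> \<iota> ` C \<subseteq> B \<and> (\<forall>c\<in>C. \<rho> (\<iota> c) = c)))"

lemma ecol_Sig:
  assumes B: "B \<in> P" "x \<in> B" "y \<in> B"
  shows "ecol x y \<in> Sigmapart X P"
proof (rule mkSig)
  have BX: "B \<subseteq> X" using P_sub[OF B(1)] .
  have xy: "x \<in> X" "y \<in> X" using B BX by auto
  show "ecol x y \<in> X \<rightarrow>\<^sub>E X" using xy unfolding ecol_def by auto
  show "\<exists>E\<in>P. ecol x y ` D \<subseteq> E" if D: "D \<in> P" for D
  proof (cases "D = B")
    case True
    have "ecol x y ` B \<subseteq> B" using BX B(3) unfolding ecol_def by auto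
    thus ?thesis using True B(1) by blast
  next
    case False
    hence "x \<notin> D" using P_disj D B by blast
    hence "ecol x y ` D \<subseteq> D" using P_sub[OF D] unfolding ecol_def by auto
    thus ?thesis using D by blast
  qed
  show "\<exists>z\<in>X. ecol x y z \<in> D" if D: "D \<in> P" for D
  proof (cases "D = B")
    case True 
    have "ecol x y y = y" unfolding ecol_def using xy by simp
    thus ?thesis using xy True B by metis
  next
    case False
    obtain z where z: "z \<in> D" using P_ne D by blast
    hence "z \<noteq> x" using P_disj D B False by blast
    moreover have "z \<in> X" using z P_sub[OF D] by blast
    ultimately have "ecol x y z = z" unfolding ecol_def by simp
    thus ?thesis using z \<open>z \<in> X\<close> by metis
  qed
qed

lemma ecol_img: "x \<in> X \<Longrightarrow> y \<in> X \<Longrightarrow> x \<noteq> y \<Longrightarrow> ecol x y ` X = X - {x}"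
proof
  assume h: "x \<in> X" "y \<in> X" "x \<noteq> y"
  show "ecol x y ` X \<subseteq> X - {x}" using h unfolding ecol_def by auto
  show "X - {x} \<subseteq> ecol x y ` X"
  proof
    fix z assume z: "z \<in> X - {x}"
    hence "ecol x y z = z" unfolding ecol_def by simp
    moreover have "z \<in> X" using z by blast
    ultimately show "z \<in> ecol x y ` X" by (metis image_eqI)
  qed
qed

lemma ecol_los: "x \<in> X \<Longrightarrow> y \<in> X \<Longrightarrow> x \<noteq> y \<Longrightarrow> los (ecol x y) = 1"
proof -
  assume h: "x \<in> X" "y \<in> X" "x \<noteq> y"
  have "card (ecol x y ` X) = card X - 1" using ecol_img[OF h] h(1) finX by simp
  moreover have "card X \<noteq> 0" using h(1) finX by auto
  ultimately show ?thesis unfolding los_def by simp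
qed

lemma sw_B: "z \<in> X \<Longrightarrow> z \<in> B \<Longrightarrow> sw B C u v z = u z" unfolding sw_def by simp
lemma sw_C: "z \<in> X \<Longrightarrow> z \<notin> B \<Longrightarrow> z \<in> C \<Longrightarrow> sw B C u v z = v z" unfolding sw_def by simp
lemma sw_O: "z \<in> X \<Longrightarrow> z \<notin> B \<Longrightarrow> z \<notin> C \<Longrightarrow> sw B C u v z = z" unfolding sw_def by simp
lemma sw_out: "z \<notin> X \<Longrightarrow> sw B C u v z = undefined" unfolding sw_def by simp

lemma sw_Sig:
  assumes B: "B \<in> P" and C: "C \<in> P" and BC: "B \<noteq> C" and u: "u ` B \<subseteq> C" and v: "v ` C \<subseteq> B"
  shows "sw B C u v \<in> Sigmapart X P"
proof (rule mkSig)
  have dj: "B \<inter> C = {}" using P_disj B C BC by blast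
  have BX: "B \<subseteq> X" and CX: "C \<subseteq> X" using P_sub B C by auto
  have inX: "sw B C u v z \<in> X" if z: "z \<in> X" for z
  proof -
    consider "z \<in> B" | "z \<notin> B" "z \<in> C" | "z \<notin> B" "z \<notin> C" by blast
    thus ?thesis
    proof cases
      case 1 thus ?thesis using sw_B[OF z] u CX by blast
    next
      case 2 thus ?thesis using sw_C[OF z] v BX by blast
    next
      case 3 thus ?thesis using sw_O[OF z] z by simp
    qed
  qed
  show "sw B C u v \<in> X \<rightarrow>\<^sub>E X" using inX sw_out by (auto simp: PiE_def Pi_def extensional_def)
  show "\<exists>E\<in>P. sw B C u v ` D \<subseteq> E" if D: "D \<in> P" for D
  proof (cases "D = B")
    case True
    have "sw B C u v ` B \<subseteq> C" using BX u by (auto simp: sw_def)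
    thus ?thesis using True C by blast
  next
    case F: False
    show ?thesis
    proof (cases "D = C")
      case True
      have "sw B C u v ` C \<subseteq> B" using CX v dj by (auto simp: sw_def)
      thus ?thesis using True B by blast
    next
      case False
      hence "D \<inter> B = {}" "D \<inter> C = {}" using P_disj D B C F by auto
      hence "sw B C u v ` D \<subseteq> D" using P_sub[OF D] by (auto simp: sw_def)
      thus ?thesis using D by blast
    qed
  qed
  show "\<exists>z\<in>X. sw B C u v z \<in> D" if D: "D \<in> P" for D
  proof (cases "D = B")
    case True
    obtain c where c: "c \<in> C" using P_ne C by blast
    have "c \<notin> B" using c dj by blast
    hence "sw B C u v c \<in> B" using c CX v by (auto simp: sw_def)
    thus ?thesis using True c CX by blast
  next
    case F: False
    show ?thesis
    proof (cases "D = C")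
      case True
      obtain b where b: "b \<in> B" using P_ne B by blast
      hence "sw B C u v b \<in> C" using BX u by (auto simp: sw_def)
      thus ?thesis using True b BX by blast
    next
      case False
      hence "D \<inter> B = {}" "D \<inter> C = {}" using P_disj D B C F by auto
      moreover obtain z where z: "z \<in> D" using P_ne D by blast
      moreover have "z \<in> X" using z P_sub[OF D] by blast
      ultimately have "sw B C u v z = z" using sw_O by blast
      thus ?thesis using z \<open>z \<in> X\<close> by metis
    qed
  qed
qed

lemma Std_Sig: "StdSw B C f \<Longrightarrow> f \<in> Sigmapart X P"
proof -
  assume "StdSw B C f"
  then obtain \<rho> \<iota> where "B \<in> P" "C \<in> P" "B \<noteq> C" "f = sw B C \<rho> \<iota>" "\<rho> ` B = C" "\<iota> ` C \<subseteq> B"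
    unfolding StdSw_def by blast
  thus ?thesis using sw_Sig[of B C \<rho> \<iota>] by simp
qed

lemma Std_exists:
  assumes B: "B \<in> P" and C: "C \<in> P" and BC: "B \<noteq> C" and le: "card C \<le> card B"
  shows "\<exists>f. StdSw B C f"
proof -
  obtain \<iota> where i: "\<iota> ` C \<subseteq> B" "inj_on \<iota> C" using card_le_inj[OF P_fin[OF C] P_fin[OF B] le] by blast
  obtain c0 where c0: "c0 \<in> C" using P_ne C by blast
  define \<rho> where "\<rho> b = (if b \<in> \<iota> ` C then inv_into C \<iota> b else c0)" for b
  have sec: "\<forall>c\<in>C. \<rho> (\<iota> c) = c" unfolding \<rho>_def using i by auto
  have "\<rho> ` B = C"
  proof
    show "\<rho> ` B \<subseteq> C"
    proof
      fix z assume "z \<in> \<rho> ` B"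
      then obtain b where "z = \<rho> b" by blast
      thus "z \<in> C" unfolding \<rho>_def using c0 by (auto intro: inv_into_into)
    qed
    show "C \<subseteq> \<rho> ` B"
    proof
      fix c assume c: "c \<in> C"
      hence "\<iota> c \<in> B" "\<rho> (\<iota> c) = c" using i sec by auto
      thus "c \<in> \<rho> ` B" by (metis image_eqI)
    qed
  qed
  hence "StdSw B C (sw B C \<rho> \<iota>)" unfolding StdSw_def using B C BC i(1) sec by blast
  thus ?thesis by blast
qed


definition Zs :: "nat set" where "Zs = card ` P"
definition S1 :: "nat set" where "S1 = {s \<in> Zs. 2 \<le> s}"
definition Ls :: "nat set" where "Ls = {b \<in> Zs. 2 \<le> b \<and> b - 1 \<notin> Zs \<and> (\<exists>z\<in>Zs. z < b)}"
definition amax :: "nat \<Rightarrow> nat" where "amax b = Max {z \<in> Zs. z < b}"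

lemma finZ: "finite Zs" unfolding Zs_def using finP by simp
lemma bs_Z: "x \<in> X \<Longrightarrow> bs x \<in> Zs" unfolding Zs_def bs_def using blkP by blast

lemma amax:
  assumes "b \<in> Ls"
  shows "amax b \<in> Zs" "amax b < b" "amax b + 2 \<le> b" "\<And>z. z \<in> Zs \<Longrightarrow> z < b \<Longrightarrow> z \<le> amax b"
proof -
  have fin: "finite {z \<in> Zs. z < b}" using finZ by simp
  have ne: "{z \<in> Zs. z < b} \<noteq> {}" using assms unfolding Ls_def by blast
  have m: "amax b \<in> {z \<in> Zs. z < b}" unfolding amax_def using Max_in[OF fin ne] .
  thus "amax b \<in> Zs" "amax b < b" by auto
  have "amax b \<noteq> b - 1" using m assms unfolding Ls_def by auto
  thus "amax b + 2 \<le> b" using m by auto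
  show "\<And>z. z \<in> Zs \<Longrightarrow> z < b \<Longrightarrow> z \<le> amax b" unfolding amax_def using fin by simp
qed

lemma Sig_los1:
  assumes w: "w \<in> Sigmapart X P" and x: "x \<in> X"
  shows "bs x \<le> los w + bs (w x)"
proof -
  have T: "w \<in> Tpart X P" using w Sig_T by blast
  have wX: "w ` X \<subseteq> X" using tpart_X[OF T] by blast
  have "card (w ` X) + card (blk x) \<le> card (w ` blk x) + card X"
    using card_img_le[OF blk_sub[OF x] wX] .
  moreover have "card (w ` blk x) \<le> bs (w x)" unfolding bs_def
    using tpart_blk[OF T x] P_fin[OF blkP[OF tpart_X[OF T x]]] by (intro card_mono) auto
  moreover have "card (w ` X) \<le> card X" using finX wX card_mono by blast
  ultimately show ?thesis unfolding los_def bs_def by linarith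
qed

lemma Sig_los2:
  assumes w: "w \<in> Sigmapart X P" and x: "x \<in> X" and x': "x' \<in> X" and ne: "blk x \<noteq> blk x'"
  shows "bs x + bs x' \<le> los w + bs (w x) + bs (w x')"
proof -
  have T: "w \<in> Tpart X P" using w Sig_T by blast
  have wX: "w ` X \<subseteq> X" using tpart_X[OF T] by blast
  have sub: "blk x \<union> blk x' \<subseteq> X" using blk_sub x x' by blast
  have "card (w ` X) + card (blk x \<union> blk x') \<le> card (w ` (blk x \<union> blk x')) + card X"
    using card_img_le[OF sub wX] .
  moreover have "card (blk x \<union> blk x') = bs x + bs x'" unfolding bs_def
    using P_disj[OF blkP[OF x] blkP[OF x'] ne] P_fin blkP x x' by (intro card_Un_disjoint) auto
  moreover have "card (w ` (blk x \<union> blk x')) \<le> bs (w x) + bs (w x')"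
  proof -
    have "w ` (blk x \<union> blk x') \<subseteq> blk (w x) \<union> blk (w x')"
      using tpart_blk[OF T x] tpart_blk[OF T x'] by blast
    hence "card (w ` (blk x \<union> blk x')) \<le> card (blk (w x) \<union> blk (w x'))"
      using P_fin blkP tpart_X[OF T] x x' by (intro card_mono) auto
    also have "\<dots> \<le> bs (w x) + bs (w x')" unfolding bs_def by (rule card_Un_le)
    finally show ?thesis .
  qed
  moreover have "card (w ` X) \<le> card X" using finX wX card_mono by blast
  ultimately show ?thesis unfolding los_def by linarith
qed

lemma Std_los:
  assumes "StdSw B C f"
  shows "card X + card C \<le> card (f ` X) + card B"
proof -
  obtain \<rho> \<iota> where B: "B \<in> P" and C: "C \<in> P" and BC: "B \<noteq> C" and f: "f = sw B C \<rho> \<iota>"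
    and r: "\<rho> ` B = C" and i: "\<iota> ` C \<subseteq> B" and sec: "\<forall>c\<in>C. \<rho> (\<iota> c) = c"
    using assms unfolding StdSw_def by blast
  have dj: "B \<inter> C = {}" using P_disj B C BC by blast
  have BX: "B \<subseteq> X" and CX: "C \<subseteq> X" using P_sub B C by auto
  have injI: "inj_on \<iota> C" using sec by (metis inj_onI)
  have s1: "X - B \<subseteq> f ` X"
  proof
    fix z assume z: "z \<in> X - B"
    show "z \<in> f ` X"
    proof (cases "z \<in> C")
      case True
      then obtain b where b: "b \<in> B" "\<rho> b = z" using r by blast
      hence "f b = z" using f sw_B BX by auto
      thus ?thesis using b BX by blast
    next
      case False
      hence "f z = z" using f sw_O z by auto
      thus ?thesis using z by (metis DiffD1 image_eqI)
    qed
  qed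
  have s2: "\<iota> ` C \<subseteq> f ` X"
  proof
    fix z assume "z \<in> \<iota> ` C"
    then obtain c where c: "c \<in> C" "z = \<iota> c" by blast
    have "c \<notin> B" using c dj by blast
    hence "f c = z" using f sw_C c CX by auto
    thus "z \<in> f ` X" using c CX by blast
  qed
  have "card ((X - B) \<union> \<iota> ` C) \<le> card (f ` X)"
    using s1 s2 finX by (intro card_mono) auto
  moreover have "card ((X - B) \<union> \<iota> ` C) = card (X - B) + card (\<iota> ` C)"
    using i finX P_fin[OF C] by (intro card_Un_disjoint) auto
  moreover have "card (\<iota> ` C) = card C" using card_image[OF injI] .
  moreover have "card (X - B) + card B = card X" using BX finX
    by (metis card_Diff_subset finite_subset le_add_diff_inverse2 card_mono)
  ultimately show ?thesis by linarith
qed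

lemma two_in: "finite B \<Longrightarrow> 2 \<le> card B \<Longrightarrow> \<exists>x y. x \<in> B \<and> y \<in> B \<and> x \<noteq> y"
proof -
  assume "finite B" "2 \<le> card B"
  then obtain x where x: "x \<in> B" by fastforce
  have "card (B - {x}) \<noteq> 0" using \<open>2 \<le> card B\<close> x \<open>finite B\<close> by simp
  hence "B - {x} \<noteq> {}" by (metis card.empty)
  then obtain y where "y \<in> B - {x}" by blast
  thus ?thesis using x by blast
qed


lemma blk_card: "B \<in> P \<Longrightarrow> x \<in> B \<Longrightarrow> bs x = card B" unfolding bs_def using blk_eq by simp

lemma exB: "s \<in> Zs \<Longrightarrow> \<exists>B\<in>P. card B = s" unfolding Zs_def by blast

lemma lower:
  assumes WS: "W \<subseteq> Sigmapart X P" and finW: "finite W"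
    and gen: "gen_sg X (Spart X P \<union> W) = Sigmapart X P"
  shows "card S1 + card Ls \<le> card W"
proof -
  have L1: "\<exists>w\<in>W. los w \<le> 1 \<and> Kp s w" if s: "s \<in> S1" for s
  proof -
    obtain B where B: "B \<in> P" "card B = s" using exB s unfolding S1_def by blast
    have "2 \<le> card B" using B s unfolding S1_def by simp
    then obtain x y where xy: "x \<in> B" "y \<in> B" "x \<noteq> y" using two_in[OF P_fin[OF B(1)]] by blast
    have xyX: "x \<in> X" "y \<in> X" using xy P_sub B by auto
    have e: "ecol x y \<in> gen_sg X (Spart X P \<union> W)" using gen ecol_Sig B xy by blast
    have "los (ecol x y) \<le> 1" using ecol_los xyX xy by simp
    moreover have "Kp s (ecol x y)"
    proof -
      have "ecol x y x = ecol x y y" using xyX xy by (simp add: ecol_def)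
      moreover have "bs x = s" "bs y = s" using blk_card[OF B(1)] xy B(2) by auto
      ultimately show ?thesis unfolding Kp_def using xyX xy(3) by blast
    qed
    ultimately show ?thesis using K_ind[OF gen e] by blast
  qed
  have L2: "\<exists>w\<in>W. Cr b w \<and> los w \<le> b - amax b" if b: "b \<in> Ls" for b
  proof -
    obtain B where B: "B \<in> P" "card B = b" using exB b unfolding Ls_def by blast
    obtain C where C: "C \<in> P" "card C = amax b" using exB amax(1)[OF b] by blast
    have BC: "B \<noteq> C" using B C amax(2)[OF b] by auto
    obtain f where f: "StdSw B C f" using Std_exists B C BC amax(2)[OF b] by fastforce
    obtain \<rho> \<iota> where fr: "f = sw B C \<rho> \<iota>" "\<rho> ` B = C"
      using f unfolding StdSw_def by blast
    obtain x where x: "x \<in> B" using P_ne B by blast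
    have xX: "x \<in> X" using x B P_sub by blast
    have "f x \<in> C" using fr x sw_B xX by auto
    hence "bs (f x) = amax b" using blk_card C by simp
    hence "Cr b f" unfolding Cr_def using xX blk_card[OF B(1) x] B amax(2)[OF b] by auto
    moreover have "f \<in> gen_sg X (Spart X P \<union> W)" using gen Std_Sig f by blast
    moreover have "los f \<le> b - amax b" using Std_los[OF f] B C unfolding los_def by linarith
    ultimately show ?thesis using Cr_ind[OF gen] by fastforce
  qed
  define w1 where "w1 s = (SOME w. w \<in> W \<and> los w \<le> 1 \<and> Kp s w)" for s
  define w2 where "w2 b = (SOME w. w \<in> W \<and> Cr b w \<and> los w \<le> b - amax b)" for b
  have w1: "w1 s \<in> W \<and> los (w1 s) \<le> 1 \<and> Kp s (w1 s)" if "s \<in> S1" for s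
    unfolding w1_def using someI_ex[OF L1[OF that, unfolded Bex_def]] by blast
  have w2: "w2 b \<in> W \<and> Cr b (w2 b) \<and> los (w2 b) \<le> b - amax b" if "b \<in> Ls" for b
    unfolding w2_def using someI_ex[OF L2[OF that, unfolded Bex_def]] by blast
  have WX: "w ` X \<subseteq> X" if "w \<in> W" for w using that WS Sig_T tpart_X by blast
  have inj1: "inj_on w1 S1"
  proof
    fix s s' assume s: "s \<in> S1" and s': "s' \<in> S1" and eq: "w1 s = w1 s'"
    show "s = s'"
    proof (rule ccontr)
      assume ne: "s \<noteq> s'"
      let ?w = "w1 s"
      obtain x y where xy: "x \<in> X" "y \<in> X" "x \<noteq> y" "?w x = ?w y" "bs x = s" "bs y = s"
        using w1[OF s] unfolding Kp_def by blast
      have "Kp s' ?w" using w1[OF s'] eq by simp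
      then obtain u v where uv: "u \<in> X" "v \<in> X" "u \<noteq> v" "?w u = ?w v" "bs u = s'" "bs v = s'"
        unfolding Kp_def by blast
      have "{x, y} \<noteq> {u, v}" using xy uv ne by (auto simp: doubleton_eq_iff)
      moreover have wX: "?w ` X \<subseteq> X" using WX w1[OF s] by blast
      ultimately have "card (?w ` X) + 2 \<le> card X" using two_pairs[OF wX xy(1-4) uv(1-4)] by blast
      thus False using w1[OF s] unfolding los_def by linarith
    qed
  qed
  have inj2: "inj_on w2 Ls"
  proof -
    have key: "w2 b1 \<noteq> w2 b2" if b1: "b1 \<in> Ls" and b2: "b2 \<in> Ls" and lt: "b1 < b2" for b1 b2
    proof
      assume eq: "w2 b1 = w2 b2"
      let ?w = "w2 b1"
      have wS: "?w \<in> Sigmapart X P" using w2[OF b1] WS by blast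
      have T: "?w \<in> Tpart X P" using wS Sig_T by blast
      obtain x where x: "x \<in> X" "b1 \<le> bs x" "bs (?w x) < b1" using w2[OF b1] unfolding Cr_def by blast
      have "Cr b2 ?w" using w2[OF b2] eq by simp
      then obtain x' where x': "x' \<in> X" "b2 \<le> bs x'" "bs (?w x') < b2" unfolding Cr_def by blast
      have lw: "los ?w \<le> b1 - amax b1" using w2[OF b1] by blast
      have wxZ: "bs (?w x) \<le> amax b1" using amax(4)[OF b1 bs_Z[OF tpart_X[OF T x(1)]]] x by blast
      show False
      proof (cases "blk x = blk x'")
        case True
        hence "x' \<in> blk x" using blk_self x' by simp
        hence "?w x' \<in> blk (?w x)" using tpart_blk[OF T x(1)] by blast
        hence "blk (?w x') = blk (?w x)" using blk_eq[OF blkP[OF tpart_X[OF T x(1)]]] by blast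
        have "bs x = bs x'" unfolding bs_def using True by simp
        have "bs x \<le> los ?w + bs (?w x)" using Sig_los1[OF wS x(1)] .
        thus False using lw wxZ amax(2)[OF b1] x' \<open>bs x = bs x'\<close> lt by linarith
      next
        case False
        have "bs x + bs x' \<le> los ?w + bs (?w x) + bs (?w x')" using Sig_los2[OF wS x(1) x'(1) False] .
        thus False using lw wxZ amax(2)[OF b1] x x' by linarith
      qed
    qed
    show ?thesis unfolding inj_on_def
    proof (intro ballI impI)
      fix b b' assume b: "b \<in> Ls" and b': "b' \<in> Ls" and e: "w2 b = w2 b'"
      show "b = b'"
      proof (rule linorder_cases[of b b'])
        assume "b < b'" thus ?thesis using key[OF b b'] e by blast
      next
        assume "b' < b" thus ?thesis using key[OF b' b] e by simp
      qed
    qed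
  qed
  have dis: "w1 ` S1 \<inter> w2 ` Ls = {}"
  proof (rule ccontr)
    assume "w1 ` S1 \<inter> w2 ` Ls \<noteq> {}"
    then obtain s b where s: "s \<in> S1" and b: "b \<in> Ls" and eq: "w1 s = w2 b" by blast
    let ?w = "w2 b"
    have wS: "?w \<in> Sigmapart X P" using w2[OF b] WS by blast
    have T: "?w \<in> Tpart X P" using wS Sig_T by blast
    obtain x where x: "x \<in> X" "b \<le> bs x" "bs (?w x) < b" using w2[OF b] unfolding Cr_def by blast
    have wxZ: "bs (?w x) \<le> amax b" using amax(4)[OF b bs_Z[OF tpart_X[OF T x(1)]]] x by blast
    have "bs x \<le> los ?w + bs (?w x)" using Sig_los1[OF wS x(1)] .
    moreover have "los ?w \<le> 1" using w1[OF s] eq by simp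
    ultimately show False using wxZ amax(3)[OF b] x by linarith
  qed
  have finS1: "finite S1" unfolding S1_def using finZ by simp
  have finL: "finite Ls" unfolding Ls_def using finZ by simp
  have "card (w1 ` S1 \<union> w2 ` Ls) = card S1 + card Ls"
    using card_Un_disjoint[OF finite_imageI[OF finS1] finite_imageI[OF finL] dis]
      card_image[OF inj1] card_image[OF inj2] by simp
  moreover have "w1 ` S1 \<union> w2 ` Ls \<subseteq> W" using w1 w2 by blast
  ultimately show ?thesis using card_mono[OF finW] by metis
qed

definition loc :: "'a set \<Rightarrow> ('a \<Rightarrow> 'a) \<Rightarrow> 'a \<Rightarrow> 'a" where
  "loc B h = restrict (\<lambda>z. if z \<in> B then h z else z) X"
definition tp :: "'a \<Rightarrow> 'a \<Rightarrow> 'a \<Rightarrow> 'a" where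
  "tp a b z = (if z = a then b else if z = b then a else z)"

lemma tp_tp: "tp a b (tp a b z) = z" unfolding tp_def by auto
lemma tp_in: "a \<in> B \<Longrightarrow> b \<in> B \<Longrightarrow> z \<in> B \<Longrightarrow> tp a b z \<in> B" unfolding tp_def by auto
lemma tp_bij: "a \<in> B \<Longrightarrow> b \<in> B \<Longrightarrow> bij_betw (tp a b) B B"
  by (rule bij_betw_byWitness[where f'="tp a b"]) (auto simp: tp_tp tp_in)

lemma fun_eqX:
  assumes "f \<in> extensional X" "g \<in> extensional X" "\<And>z. z \<in> X \<Longrightarrow> f z = g z"
  shows "f = g" using extensionalityI assms by blast

lemma loc_in: "z \<in> X \<Longrightarrow> z \<in> B \<Longrightarrow> loc B h z = h z" unfolding loc_def by simp
lemma loc_out: "z \<in> X \<Longrightarrow> z \<notin> B \<Longrightarrow> loc B h z = z" unfolding loc_def by simp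

lemma loc_Sig:
  assumes B: "B \<in> P" and h: "h ` B \<subseteq> B"
  shows "loc B h \<in> Sigmapart X P"
proof -
  have "loc B h = sw B {} h id" unfolding loc_def sw_def by auto
  show ?thesis
  proof (rule mkSig)
    have BX: "B \<subseteq> X" using P_sub B by blast
    show "loc B h \<in> X \<rightarrow>\<^sub>E X" using BX h unfolding loc_def by (auto simp: PiE_def Pi_def)
    show "\<exists>E\<in>P. loc B h ` D \<subseteq> E" if D: "D \<in> P" for D
    proof (cases "D = B")
      case True
      have "loc B h ` B \<subseteq> B" using BX h unfolding loc_def by auto
      thus ?thesis using True B by blast
    next
      case False
      hence "D \<inter> B = {}" using P_disj D B by blast
      hence "loc B h ` D \<subseteq> D" using P_sub[OF D] unfolding loc_def by auto
      thus ?thesis using D by blast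
    qed
    show "\<exists>z\<in>X. loc B h z \<in> D" if D: "D \<in> P" for D
    proof (cases "D = B")
      case True
      obtain b where b: "b \<in> B" using P_ne B by blast
      hence "loc B h b \<in> B" using BX h unfolding loc_def by auto
      thus ?thesis using True b BX by blast
    next
      case False
      hence "D \<inter> B = {}" using P_disj D B by blast
      moreover obtain z where z: "z \<in> D" using P_ne D by blast
      moreover have "z \<in> X" using z P_sub[OF D] by blast
      ultimately have "loc B h z = z" using loc_out by blast
      thus ?thesis using z \<open>z \<in> X\<close> by metis
    qed
  qed
qed

lemma loc_perm_S:
  assumes B: "B \<in> P" and h: "bij_betw h B B"
  shows "loc B h \<in> Spart X P"
proof -
  have hB: "h ` B \<subseteq> B" using h bij_betw_imp_surj_on by blast
  have Sg: "loc B h \<in> Sigmapart X P" using loc_Sig B hB by blast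
  have "inj_on (loc B h) X"
  proof
    fix x y assume x: "x \<in> X" and y: "y \<in> X" and e: "loc B h x = loc B h y"
    consider "x \<in> B" "y \<in> B" | "x \<in> B" "y \<notin> B" | "x \<notin> B" "y \<in> B" | "x \<notin> B" "y \<notin> B" by blast
    thus "x = y"
    proof cases
      case 1 thus ?thesis using e loc_in x y h by (metis bij_betw_imp_inj_on inj_onD)
    next
      case 2 thus ?thesis using e loc_in loc_out x y hB by (metis image_subset_iff)
    next
      case 3 thus ?thesis using e loc_in loc_out x y hB by (metis image_subset_iff)
    next
      case 4 thus ?thesis using e loc_out x y by metis
    qed
  qed
  thus ?thesis using Sig_inj_S Sg by blast
qed

lemma ecol_conj:
  assumes B: "B \<in> P" and abcd: "a \<in> B" "b \<in> B" "c \<in> B" "d \<in> B"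
  shows "compose X (loc B (tp c d)) (compose X (ecol a b) (loc B (tp c d))) = ecol (tp c d a) (tp c d b)"
proof (rule fun_eqX)
  show "compose X (loc B (tp c d)) (compose X (ecol a b) (loc B (tp c d))) \<in> extensional X" by simp
  show "ecol (tp c d a) (tp c d b) \<in> extensional X" unfolding ecol_def by simp
  fix z assume z: "z \<in> X"
  have BX: "B \<subseteq> X" using P_sub B by blast
  show "compose X (loc B (tp c d)) (compose X (ecol a b) (loc B (tp c d))) z = ecol (tp c d a) (tp c d b) z"
  proof (cases "z \<in> B")
    case True
    have t: "tp c d z \<in> B" "tp c d z \<in> X" using tp_in abcd True BX by auto
    have e: "ecol a b (tp c d z) = (if tp c d z = a then b else tp c d z)" using t unfolding ecol_def by simp
    have "ecol a b (tp c d z) \<in> B" using e abcd t by auto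
    hence "compose X (loc B (tp c d)) (compose X (ecol a b) (loc B (tp c d))) z = tp c d (ecol a b (tp c d z))"
      using z True t BX by (simp add: compose_eq loc_in subsetD)
    also have "\<dots> = (if z = tp c d a then tp c d b else z)" using e tp_tp by (metis)
    also have "\<dots> = ecol (tp c d a) (tp c d b) z" using z unfolding ecol_def by simp
    finally show ?thesis .
  next
    case False
    have "z \<noteq> a" "z \<noteq> tp c d a" using False abcd tp_in by auto
    thus ?thesis using z False by (simp add: compose_eq loc_out ecol_def)
  qed
qed

lemma swap_S:
  assumes B: "B \<in> P" and C: "C \<in> P" and BC: "B \<noteq> C" and bb: "bij_betw \<beta> B C"
  shows "sw B C \<beta> (inv_into B \<beta>) \<in> Spart X P" "StdSw B C (sw B C \<beta> (inv_into B \<beta>))"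
proof -
  let ?t = "sw B C \<beta> (inv_into B \<beta>)"
  have dj: "B \<inter> C = {}" using P_disj B C BC by blast
  have BX: "B \<subseteq> X" and CX: "C \<subseteq> X" using P_sub B C by auto
  have r: "\<beta> ` B = C" using bb bij_betw_imp_surj_on by blast
  have inj: "inj_on \<beta> B" using bb bij_betw_imp_inj_on by blast
  have i: "inv_into B \<beta> ` C \<subseteq> B" using r by (auto intro: inv_into_into)
  have sec: "\<forall>c\<in>C. \<beta> (inv_into B \<beta> c) = c" using r by (auto intro: f_inv_into_f)
  have Sg: "?t \<in> Sigmapart X P" using sw_Sig[OF B C BC] r i by blast
  have inv: "?t (?t z) = z" if z: "z \<in> X" for z
  proof -
    consider "z \<in> B" | "z \<notin> B" "z \<in> C" | "z \<notin> B" "z \<notin> C" by blast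
    thus ?thesis
    proof cases
      case 1
      have "\<beta> z \<in> C" "\<beta> z \<notin> B" using 1 r dj by auto
      thus ?thesis using 1 z sw_B sw_C CX inj by (simp add: inv_into_f_f subsetD)
    next
      case 2
      have "inv_into B \<beta> z \<in> B" using 2 i by auto
      thus ?thesis using 2 z sw_B sw_C BX sec by (simp add: subsetD)
    next
      case 3 thus ?thesis using z sw_O by simp
    qed
  qed
  have "inj_on ?t X" by (rule inj_onI) (metis inv)
  thus "?t \<in> Spart X P" using Sig_inj_S Sg by blast
  show "StdSw B C ?t" unfolding StdSw_def using B C BC r i sec by blast
qed

lemma ecol_transport:
  assumes B: "B \<in> P" and B0: "B0 \<in> P" and ne: "B \<noteq> B0" and bb: "bij_betw \<beta> B B0"
    and x0: "x0 \<in> B0" and y0: "y0 \<in> B0"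
  shows "compose X (sw B B0 \<beta> (inv_into B \<beta>)) (compose X (ecol x0 y0) (sw B B0 \<beta> (inv_into B \<beta>)))
    = ecol (inv_into B \<beta> x0) (inv_into B \<beta> y0)"
proof (rule fun_eqX)
  let ?t = "sw B B0 \<beta> (inv_into B \<beta>)"
  let ?i = "inv_into B \<beta>"
  show "compose X ?t (compose X (ecol x0 y0) ?t) \<in> extensional X" by simp
  show "ecol (?i x0) (?i y0) \<in> extensional X" unfolding ecol_def by simp
  have dj: "B \<inter> B0 = {}" using P_disj B B0 ne by blast
  have BX: "B \<subseteq> X" and CX: "B0 \<subseteq> X" using P_sub B B0 by auto
  have r: "\<beta> ` B = B0" using bb bij_betw_imp_surj_on by blast
  have inj: "inj_on \<beta> B" using bb bij_betw_imp_inj_on by blast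
  have i: "?i ` B0 \<subseteq> B" using r by (auto intro: inv_into_into)
  have sec: "\<forall>c\<in>B0. \<beta> (?i c) = c" using r by (auto intro: f_inv_into_f)
  have ix0: "?i x0 \<in> B" "?i y0 \<in> B" using i x0 y0 by auto
  fix z assume z: "z \<in> X"
  consider "z \<in> B" | "z \<notin> B" "z \<in> B0" | "z \<notin> B" "z \<notin> B0" by blast
  thus "compose X ?t (compose X (ecol x0 y0) ?t) z = ecol (?i x0) (?i y0) z"
  proof cases
    case 1
    have bz: "\<beta> z \<in> B0" "\<beta> z \<in> X" using 1 r CX by auto
    have e: "ecol x0 y0 (\<beta> z) = (if \<beta> z = x0 then y0 else \<beta> z)" using bz unfolding ecol_def by simp
    have eB: "ecol x0 y0 (\<beta> z) \<in> B0" "ecol x0 y0 (\<beta> z) \<notin> B" using e bz y0 dj by auto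
    have "compose X ?t (compose X (ecol x0 y0) ?t) z = ?i (ecol x0 y0 (\<beta> z))"
      using z 1 eB bz CX sw_B sw_C by (simp add: compose_eq subsetD)
    also have "\<dots> = (if z = ?i x0 then ?i y0 else z)"
      using e 1 inj x0 by (auto simp: inv_into_f_f f_inv_into_f r)
    also have "\<dots> = ecol (?i x0) (?i y0) z" using z unfolding ecol_def by simp
    finally show ?thesis .
  next
    case 2
    have iz: "?i z \<in> B" "?i z \<in> X" using 2 i BX by auto
    have "ecol x0 y0 (?i z) = ?i z" using iz x0 dj unfolding ecol_def by auto
    hence "compose X ?t (compose X (ecol x0 y0) ?t) z = \<beta> (?i z)"
      using z 2 iz sw_B sw_C by (simp add: compose_eq)
    also have "\<dots> = z" using sec 2 by blast
    also have "\<dots> = ecol (?i x0) (?i y0) z" using z 2 ix0 unfolding ecol_def by auto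
    finally show ?thesis .
  next
    case 3
    have "z \<noteq> x0" "z \<noteq> ?i x0" using 3 x0 ix0 by auto
    thus ?thesis using z 3 sw_O by (simp add: compose_eq ecol_def)
  qed
qed

lemma Std_square:
  assumes s: "StdSw B C s" and cd: "card B = card C + 1"
  shows "\<exists>x y. x \<in> B \<and> y \<in> B \<and> x \<noteq> y \<and> compose X s s = ecol x y"
proof -
  obtain \<rho> \<iota> where B: "B \<in> P" and C: "C \<in> P" and BC: "B \<noteq> C" and f: "s = sw B C \<rho> \<iota>"
    and r: "\<rho> ` B = C" and i: "\<iota> ` C \<subseteq> B" and sec: "\<forall>c\<in>C. \<rho> (\<iota> c) = c"
    using assms unfolding StdSw_def by blast
  have dj: "B \<inter> C = {}" using P_disj B C BC by blast
  have BX: "B \<subseteq> X" and CX: "C \<subseteq> X" using P_sub B C by auto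
  have injI: "inj_on \<iota> C" using sec by (metis inj_onI)
  have "card (\<iota> ` C) = card C" using card_image[OF injI] .
  hence "card (B - \<iota> ` C) = 1" using cd i P_fin[OF B] by (simp add: card_Diff_subset finite_subset)
  then obtain x where x: "x \<in> B" "x \<notin> \<iota> ` C" by (metis DiffE card_1_singletonE insertI1)
  define y where "y = \<iota> (\<rho> x)"
  have rx: "\<rho> x \<in> C" using r x by blast
  have yi: "y \<in> \<iota> ` C" using rx unfolding y_def by blast
  have y: "y \<in> B" "y \<noteq> x" using yi i x by auto
  have "compose X s s = ecol x y"
  proof (rule fun_eqX)
    show "compose X s s \<in> extensional X" by simp
    show "ecol x y \<in> extensional X" unfolding ecol_def by simp
    fix z assume z: "z \<in> X"
    consider "z \<in> B" | "z \<notin> B" "z \<in> C" | "z \<notin> B" "z \<notin> C" by blast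
    thus "compose X s s z = ecol x y z"
    proof cases
      case 1
      have rz: "\<rho> z \<in> C" "\<rho> z \<notin> B" "\<rho> z \<in> X" using r 1 dj CX by auto
      have "compose X s s z = \<iota> (\<rho> z)" using f z 1 rz sw_B sw_C by (simp add: compose_eq)
      also have "\<dots> = ecol x y z"
      proof (cases "z = x")
        case True thus ?thesis using z unfolding y_def ecol_def by simp
      next
        case False
        hence "z \<in> \<iota> ` C"
        proof -
          have "card (B - \<iota> ` C) = 1" by fact
          hence "B - \<iota> ` C = {x}" using x by (metis DiffI card_1_singletonE singletonD)
          thus ?thesis using 1 False by blast
        qed
        then obtain c where "c \<in> C" "z = \<iota> c" by blast
        thus ?thesis using sec False z unfolding ecol_def by simp
      qed
      finally show ?thesis .
    next
      case 2
      have iz: "\<iota> z \<in> B" "\<iota> z \<in> X" using i 2 BX by auto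
      have "compose X s s z = \<rho> (\<iota> z)" using f z 2 iz sw_B sw_C by (simp add: compose_eq)
      also have "\<dots> = z" using sec 2 by blast
      also have "\<dots> = ecol x y z" using 2 x z unfolding ecol_def by auto
      finally show ?thesis .
    next
      case 3
      have "z \<noteq> x" using 3 x by auto
      thus ?thesis using f z 3 sw_O by (simp add: compose_eq ecol_def)
    qed
  qed
  thus ?thesis using x y by blast
qed

lemma three_trick:
  assumes s1: "StdSw B B' s1" and s2: "StdSw B' C s2" and BC: "B \<noteq> C"
  shows "StdSw B C (compose X s1 (compose X s2 s1))"
proof -
  obtain \<rho>1 \<iota>1 where B: "B \<in> P" and B': "B' \<in> P" and BB': "B \<noteq> B'" and f1: "s1 = sw B B' \<rho>1 \<iota>1"
    and r1: "\<rho>1 ` B = B'" and i1: "\<iota>1 ` B' \<subseteq> B" and sec1: "\<forall>c\<in>B'. \<rho>1 (\<iota>1 c) = c"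
    using s1 unfolding StdSw_def by blast
  obtain \<rho>2 \<iota>2 where C: "C \<in> P" and B'C: "B' \<noteq> C" and f2: "s2 = sw B' C \<rho>2 \<iota>2"
    and r2: "\<rho>2 ` B' = C" and i2: "\<iota>2 ` C \<subseteq> B'" and sec2: "\<forall>c\<in>C. \<rho>2 (\<iota>2 c) = c"
    using s2 unfolding StdSw_def by blast
  have d1: "B \<inter> B' = {}" "B \<inter> C = {}" "B' \<inter> C = {}" using P_disj B B' C BB' BC B'C by auto
  have BX: "B \<subseteq> X" "B' \<subseteq> X" "C \<subseteq> X" using P_sub B B' C by auto
  have eq: "compose X s1 (compose X s2 s1) = sw B C (\<rho>2 \<circ> \<rho>1) (\<iota>1 \<circ> \<iota>2)"
  proof (rule fun_eqX)
    show "compose X s1 (compose X s2 s1) \<in> extensional X" by simp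
    show "sw B C (\<rho>2 \<circ> \<rho>1) (\<iota>1 \<circ> \<iota>2) \<in> extensional X" unfolding sw_def by simp
    fix z assume z: "z \<in> X"
    consider "z \<in> B" | "z \<in> B'" | "z \<in> C" | "z \<notin> B" "z \<notin> B'" "z \<notin> C" by blast
    thus "compose X s1 (compose X s2 s1) z = sw B C (\<rho>2 \<circ> \<rho>1) (\<iota>1 \<circ> \<iota>2) z"
    proof cases
      case 1
      have a: "\<rho>1 z \<in> B'" "\<rho>1 z \<in> X" using r1 1 BX by auto
      have b: "\<rho>2 (\<rho>1 z) \<in> C" "\<rho>2 (\<rho>1 z) \<in> X" "\<rho>2 (\<rho>1 z) \<notin> B" "\<rho>2 (\<rho>1 z) \<notin> B'"
        using r2 a d1 BX by auto
      have "compose X s1 (compose X s2 s1) z = \<rho>2 (\<rho>1 z)"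
        using z 1 a b f1 f2 sw_B sw_O by (simp add: compose_eq)
      thus ?thesis using z 1 sw_B by simp
    next
      case 2
      have nb: "z \<notin> B" "z \<notin> C" using 2 d1 by auto
      have a: "\<iota>1 z \<in> B" "\<iota>1 z \<in> X" "\<iota>1 z \<notin> B'" "\<iota>1 z \<notin> C" using i1 2 BX d1 by auto
      have "compose X s1 (compose X s2 s1) z = \<rho>1 (\<iota>1 z)"
        using z 2 nb a f1 f2 sw_B sw_C sw_O by (simp add: compose_eq)
      also have "\<dots> = z" using sec1 2 by blast
      finally show ?thesis using z nb sw_O by simp
    next
      case 3
      have nb: "z \<notin> B" "z \<notin> B'" using 3 d1 by auto
      have a: "\<iota>2 z \<in> B'" "\<iota>2 z \<in> X" "\<iota>2 z \<notin> B" using i2 3 BX d1 by auto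
      have "compose X s1 (compose X s2 s1) z = \<iota>1 (\<iota>2 z)"
        using z 3 nb a f1 f2 sw_B sw_C sw_O by (simp add: compose_eq)
      thus ?thesis using z nb 3 sw_C by simp
    next
      case 4
      thus ?thesis using z f1 f2 sw_O by (simp add: compose_eq)
    qed
  qed
  have "(\<rho>2 \<circ> \<rho>1) ` B = C" using r1 r2 image_comp by metis
  moreover have "(\<iota>1 \<circ> \<iota>2) ` C \<subseteq> B" using i1 i2 by auto
  moreover have "\<forall>c\<in>C. (\<rho>2 \<circ> \<rho>1) ((\<iota>1 \<circ> \<iota>2) c) = c" using sec1 sec2 i2 by auto
  ultimately show ?thesis unfolding StdSw_def eq using B C BC by blast
qed

context
  fixes G :: "('a \<Rightarrow> 'a) set"
  assumes SG: "Spart X P \<subseteq> G" and cG: "\<And>a b. a \<in> G \<Longrightarrow> b \<in> G \<Longrightarrow> compose X a b \<in> G"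
begin

lemma conj_step:
  assumes B: "B \<in> P" and ab: "a \<in> B" "b \<in> B" and cd: "c \<in> B" "d \<in> B" and e: "ecol a b \<in> G"
  shows "ecol (tp c d a) (tp c d b) \<in> G"
proof -
  have t: "loc B (tp c d) \<in> G" using loc_perm_S[OF B tp_bij[OF cd]] SG by blast
  show ?thesis using ecol_conj[OF B ab cd] cG[OF t cG[OF e t]] by simp
qed

lemma ecol_all:
  assumes B: "B \<in> P" and x0: "x0 \<in> B" "y0 \<in> B" "x0 \<noteq> y0" and e: "ecol x0 y0 \<in> G"
    and xy: "x \<in> B" "y \<in> B" "x \<noteq> y"
  shows "ecol x y \<in> G"
proof -
  define y1 where "y1 = tp x0 x y0"
  have "tp x0 x x0 = x" unfolding tp_def by simp
  hence e1: "ecol x y1 \<in> G" using conj_step[OF B x0(1,2) x0(1) xy(1) e] unfolding y1_def by simp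
  have y1: "y1 \<in> B" "y1 \<noteq> x" using tp_in x0 xy unfolding y1_def tp_def by auto
  have "tp y1 y x = x" "tp y1 y y1 = y" using y1 xy unfolding tp_def by auto
  thus ?thesis using conj_step[OF B xy(1) y1(1) y1(1) xy(2) e1] by simp
qed

lemma loc_all:
  assumes B: "B \<in> P" and E: "\<And>x y. x \<in> B \<Longrightarrow> y \<in> B \<Longrightarrow> x \<noteq> y \<Longrightarrow> ecol x y \<in> G"
  shows "h ` B \<subseteq> B \<Longrightarrow> loc B h \<in> G"
proof (induction "card B - card (h ` B)" arbitrary: h rule: less_induct)
  case less
  have finB: "finite B" using P_fin B by blast
  have BX: "B \<subseteq> X" using P_sub B by blast
  show ?case
  proof (cases "inj_on h B")
    case True
    hence "h ` B = B" using endo_inj_surj finB less.prems by blast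
    hence "bij_betw h B B" using True unfolding bij_betw_def by blast
    thus ?thesis using loc_perm_S B SG by blast
  next
    case False
    then obtain x y where xy: "x \<in> B" "y \<in> B" "x \<noteq> y" "h x = h y" unfolding inj_on_def by blast
    have "h ` B \<noteq> B"
    proof
      assume "h ` B = B"
      hence "inj_on h B" using finB by (simp add: eq_card_imp_inj_on)
      thus False using False by blast
    qed
    then obtain z where z: "z \<in> B" "z \<notin> h ` B" using less.prems by blast
    define h' where "h' = h(x := z)"
    have h'B: "h' ` B \<subseteq> B" using less.prems z unfolding h'_def by auto
    have img: "h' ` B = insert z (h ` B)"
    proof
      show "h' ` B \<subseteq> insert z (h ` B)" unfolding h'_def by auto
      show "insert z (h ` B) \<subseteq> h' ` B"
      proof
        fix w assume "w \<in> insert z (h ` B)"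
        then consider "w = z" | "w \<in> h ` B" by blast
        thus "w \<in> h' ` B"
        proof cases
          case 1 thus ?thesis using xy unfolding h'_def by (metis fun_upd_same image_eqI)
        next
          case 2
          then obtain t where t: "t \<in> B" "w = h t" by blast
          show ?thesis
          proof (cases "t = x")
            case True
            hence "w = h' y" using t xy unfolding h'_def by simp
            thus ?thesis using xy by blast
          next
            case False
            hence "w = h' t" using t unfolding h'_def by simp
            thus ?thesis using t by blast
          qed
        qed
      qed
    qed
    have "card (h' ` B) = Suc (card (h ` B))" using img z finB by simp
    moreover have "card (h' ` B) \<le> card B" using h'B finB card_mono by blast
    ultimately have "card B - card (h' ` B) < card B - card (h ` B)" by linarith
    hence IH: "loc B h' \<in> G" using less.hyps h'B by blast
    have eq: "loc B h = compose X (loc B h') (ecol x y)"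
    proof (rule fun_eqX)
      show "loc B h \<in> extensional X" unfolding loc_def by simp
      show "compose X (loc B h') (ecol x y) \<in> extensional X" by simp
      fix w assume w: "w \<in> X"
      show "loc B h w = compose X (loc B h') (ecol x y) w"
      proof (cases "w \<in> B")
        case True
        show ?thesis
        proof (cases "w = x")
          case True
          have "ecol x y w = y" using w True unfolding ecol_def by simp
          thus ?thesis using w True xy BX \<open>w \<in> B\<close> unfolding h'_def
            by (simp add: compose_eq loc_in subsetD)
        next
          case False
          have "ecol x y w = w" using w False unfolding ecol_def by simp
          thus ?thesis using w False \<open>w \<in> B\<close> unfolding h'_def by (simp add: compose_eq loc_in)
        qed
      next
        case False
        have "w \<noteq> x" using False xy by auto
        hence "ecol x y w = w" using w unfolding ecol_def by simp
        thus ?thesis using w False by (simp add: compose_eq loc_out)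
      qed
    qed
    show ?thesis unfolding eq using cG[OF IH E[OF xy(1-3)]] .
  qed
qed

lemma U3:
  assumes s: "StdSw B C s" "s \<in> G"
    and LB: "\<And>h. h ` B \<subseteq> B \<Longrightarrow> loc B h \<in> G"
    and u: "u ` B \<subseteq> C" and v: "v ` C \<subseteq> B"
  shows "sw B C u v \<in> G"
proof -
  obtain \<rho> \<iota> where B: "B \<in> P" and C: "C \<in> P" and BC: "B \<noteq> C" and f: "s = sw B C \<rho> \<iota>"
    and r: "\<rho> ` B = C" and i: "\<iota> ` C \<subseteq> B" and sec: "\<forall>c\<in>C. \<rho> (\<iota> c) = c"
    using s unfolding StdSw_def by blast
  have dj: "B \<inter> C = {}" using P_disj B C BC by blast
  have BX: "B \<subseteq> X" and CX: "C \<subseteq> X" using P_sub B C by auto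
  have injI: "inj_on \<iota> C" using sec by (metis inj_onI)
  define m2 where "m2 b = (SOME b'. b' \<in> B \<and> \<rho> b' = u b)" for b
  have m2: "m2 b \<in> B \<and> \<rho> (m2 b) = u b" if "b \<in> B" for b
  proof -
    have "u b \<in> \<rho> ` B" using u r that by blast
    then obtain b' where "b' \<in> B" "u b = \<rho> b'" by (rule imageE)
    hence "\<exists>b'. b' \<in> B \<and> \<rho> b' = u b" by metis
    thus ?thesis unfolding m2_def by (rule someI_ex)
  qed
  define m1 where "m1 b = (if b \<in> \<iota> ` C then v (inv_into C \<iota> b) else b)" for b
  have m1B: "m1 ` B \<subseteq> B" unfolding m1_def using v injI by (auto simp: inv_into_f_f)
  have m2B: "m2 ` B \<subseteq> B" using m2 by blast
  have eq: "sw B C u v = compose X (loc B m1) (compose X s (loc B m2))"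
  proof (rule fun_eqX)
    show "sw B C u v \<in> extensional X" unfolding sw_def by simp
    show "compose X (loc B m1) (compose X s (loc B m2)) \<in> extensional X" by simp
    fix z assume z: "z \<in> X"
    consider "z \<in> B" | "z \<notin> B" "z \<in> C" | "z \<notin> B" "z \<notin> C" by blast
    thus "sw B C u v z = compose X (loc B m1) (compose X s (loc B m2)) z"
    proof cases
      case 1
      have a: "m2 z \<in> B" "\<rho> (m2 z) = u z" "m2 z \<in> X" using m2 1 BX by auto
      have b: "u z \<in> C" "u z \<notin> B" "u z \<in> X" using u 1 dj CX by auto
      have "compose X (loc B m1) (compose X s (loc B m2)) z = u z"
        using z 1 a b f sw_B loc_in loc_out by (simp add: compose_eq)
      thus ?thesis using z 1 sw_B by simp
    next
      case 2
      have a: "\<iota> z \<in> B" "\<iota> z \<in> X" using i 2 BX by auto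
      have "m1 (\<iota> z) = v z" unfolding m1_def using 2 injI by (simp add: inv_into_f_f)
      hence "compose X (loc B m1) (compose X s (loc B m2)) z = v z"
        using z 2 a f sw_C loc_in loc_out by (simp add: compose_eq)
      thus ?thesis using z 2 sw_C by simp
    next
      case 3
      thus ?thesis using z f sw_O loc_out by (simp add: compose_eq)
    qed
  qed
  show ?thesis unfolding eq using cG[OF LB[OF m1B] cG[OF s(2) LB[OF m2B]]] .
qed


lemma eq_std:
  assumes B: "B \<in> P" and C: "C \<in> P" and BC: "B \<noteq> C" and cd: "card C = card B"
  shows "\<exists>s\<in>G. StdSw B C s"
proof -
  obtain \<beta> where "bij_betw \<beta> B C" using finite_same_card_bij[OF P_fin[OF B] P_fin[OF C] cd[symmetric]] by blast
  thus ?thesis using swap_S[OF B C BC] SG by blast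
qed

lemma std_all:
  assumes HypSw: "\<And>a b. a \<in> Zs \<Longrightarrow> b \<in> Zs \<Longrightarrow> a < b \<Longrightarrow> (\<forall>z\<in>Zs. \<not> (a < z \<and> z < b)) \<Longrightarrow>
      \<exists>B0 C0 s. B0 \<in> P \<and> C0 \<in> P \<and> card B0 = b \<and> card C0 = a \<and> StdSw B0 C0 s \<and> s \<in> G"
  shows "B \<in> P \<Longrightarrow> C \<in> P \<Longrightarrow> B \<noteq> C \<Longrightarrow> card C \<le> card B \<Longrightarrow> \<exists>s\<in>G. StdSw B C s"
proof (induction "card B - card C" arbitrary: B C rule: less_induct)
  case less
  note B = less.prems(1) and C = less.prems(2) and BC = less.prems(3) and le = less.prems(4)
  show ?case
  proof (cases "card C = card B")
    case True thus ?thesis using eq_std B C BC by blast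
  next
    case lt: False
    hence lt: "card C < card B" using le by simp
    show ?thesis
    proof (cases "\<exists>D\<in>P. card C < card D \<and> card D < card B")
      case True
      then obtain D where D: "D \<in> P" "card C < card D" "card D < card B" by blast
      have d1: "card B - card D < card B - card C" using D by linarith
      have d2: "card D - card C < card B - card C" using D by linarith
      have "B \<noteq> D" "D \<noteq> C" using D by auto
      hence "\<exists>s\<in>G. StdSw B D s" "\<exists>s\<in>G. StdSw D C s"
        using less.hyps[OF d1 B D(1)] less.hyps[OF d2 D(1) C] D by auto
      then obtain s1 s2 where "s1 \<in> G" "StdSw B D s1" "s2 \<in> G" "StdSw D C s2" by blast
      thus ?thesis using three_trick[of B D s1 C s2] BC cG by blast
    next
      case False
      have "\<forall>z\<in>Zs. \<not> (card C < z \<and> z < card B)" using False unfolding Zs_def by blast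
      moreover have "card C \<in> Zs" "card B \<in> Zs" unfolding Zs_def using B C by auto
      ultimately obtain B0 C0 s0 where H: "B0 \<in> P" "C0 \<in> P" "card B0 = card B" "card C0 = card C"
        "StdSw B0 C0 s0" "s0 \<in> G" using HypSw lt by blast
      have "\<exists>s\<in>G. StdSw B C0 s"
      proof (cases "B = B0")
        case True thus ?thesis using H by blast
      next
        case False
        then obtain t where t: "t \<in> G" "StdSw B B0 t" using eq_std B H by metis
        have "B \<noteq> C0" using H lt by auto
        thus ?thesis using three_trick[OF t(2) H(5)] cG[OF t(1) cG[OF H(6) t(1)]] by blast
      qed
      then obtain s1 where s1: "s1 \<in> G" "StdSw B C0 s1" by blast
      show ?thesis
      proof (cases "C = C0")
        case True thus ?thesis using s1 by blast
      next
        case False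
        then obtain t where t: "t \<in> G" "StdSw C0 C t" using eq_std C H by metis
        thus ?thesis using three_trick[OF s1(2) t(2) BC] cG[OF s1(1) cG[OF t(1) s1(1)]] by blast
      qed
    qed
  qed
qed

lemma loc_block:
  assumes HypSw: "\<And>a b. a \<in> Zs \<Longrightarrow> b \<in> Zs \<Longrightarrow> a < b \<Longrightarrow> (\<forall>z\<in>Zs. \<not> (a < z \<and> z < b)) \<Longrightarrow>
      \<exists>B0 C0 s. B0 \<in> P \<and> C0 \<in> P \<and> card B0 = b \<and> card C0 = a \<and> StdSw B0 C0 s \<and> s \<in> G"
    and HypE: "\<And>s. s \<in> Zs \<Longrightarrow> 2 \<le> s \<Longrightarrow> s - 1 \<notin> Zs \<Longrightarrow>
      \<exists>B0\<in>P. card B0 = s \<and> (\<exists>x y. x \<in> B0 \<and> y \<in> B0 \<and> x \<noteq> y \<and> ecol x y \<in> G)"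
    and B: "B \<in> P" and h: "h ` B \<subseteq> B"
  shows "loc B h \<in> G"
proof -
  have finB: "finite B" using P_fin B by blast
  have E: "ecol x y \<in> G" if xy: "x \<in> B" "y \<in> B" "x \<noteq> y" for x y
  proof -
    have c2: "2 \<le> card B"
    proof (rule ccontr)
      assume "\<not> 2 \<le> card B"
      hence "card B \<le> Suc 0" by simp
      thus False using xy finB card_le_Suc0_iff_eq by blast
    qed
    have "\<exists>x0 y0. x0 \<in> B \<and> y0 \<in> B \<and> x0 \<noteq> y0 \<and> ecol x0 y0 \<in> G"
    proof (cases "card B - 1 \<in> Zs")
      case True
      hence "card B - 1 \<in> card ` P" unfolding Zs_def by simp
      then obtain C where C0: "C \<in> P" "card B - 1 = card C" by (rule imageE)
      hence C: "C \<in> P" "card C = card B - 1" by auto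
      have BC: "B \<noteq> C" using C c2 by auto
      have "card C \<le> card B" using C by simp
      then obtain s where s: "s \<in> G" "StdSw B C s" using std_all[OF HypSw B C(1) BC] by blast
      have "card B = card C + 1" using C c2 by simp
      then obtain x0 y0 where "x0 \<in> B" "y0 \<in> B" "x0 \<noteq> y0" "compose X s s = ecol x0 y0"
        using Std_square[OF s(2)] by blast
      thus ?thesis using cG[OF s(1) s(1)] by metis
    next
      case False
      have "card B \<in> Zs" unfolding Zs_def using B by blast
      have "\<exists>B0\<in>P. card B0 = card B \<and> (\<exists>x y. x \<in> B0 \<and> y \<in> B0 \<and> x \<noteq> y \<and> ecol x y \<in> G)"
        using HypE[OF _ c2 False] \<open>card B \<in> Zs\<close> by blast
      then obtain B0 x0 y0 where H: "B0 \<in> P" "card B0 = card B" "x0 \<in> B0" "y0 \<in> B0" "x0 \<noteq> y0" "ecol x0 y0 \<in> G"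
        by blast
      show ?thesis
      proof (cases "B = B0")
        case True thus ?thesis using H by blast
      next
        case ne: False
        obtain \<beta> where bb: "bij_betw \<beta> B B0"
          using finite_same_card_bij[OF finB P_fin[OF H(1)] H(2)[symmetric]] by blast
        have t: "sw B B0 \<beta> (inv_into B \<beta>) \<in> G" using swap_S[OF B H(1) ne bb] SG by blast
        have r: "\<beta> ` B = B0" using bb bij_betw_imp_surj_on by blast
        have i: "inv_into B \<beta> x0 \<in> B" "inv_into B \<beta> y0 \<in> B" using H r by (auto intro: inv_into_into)
        have "inv_into B \<beta> x0 \<noteq> inv_into B \<beta> y0"
        proof
          assume "inv_into B \<beta> x0 = inv_into B \<beta> y0"
          hence "\<beta> (inv_into B \<beta> x0) = \<beta> (inv_into B \<beta> y0)" by simp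
          moreover have "\<beta> (inv_into B \<beta> x0) = x0" "\<beta> (inv_into B \<beta> y0) = y0"
            using H(3,4) r by (auto intro: f_inv_into_f)
          ultimately show False using H(5) by simp
        qed
        moreover have "ecol (inv_into B \<beta> x0) (inv_into B \<beta> y0) \<in> G"
          using ecol_transport[OF B H(1) ne bb H(3) H(4)] cG[OF t cG[OF H(6) t]] by simp
        ultimately show ?thesis using i by blast
      qed
    qed
    thus ?thesis using ecol_all[OF B _ _ _ _ xy] by blast
  qed
  show ?thesis using loc_all[OF B E h] by blast
qed


context
  assumes HypSw: "\<And>a b. a \<in> Zs \<Longrightarrow> b \<in> Zs \<Longrightarrow> a < b \<Longrightarrow> (\<forall>z\<in>Zs. \<not> (a < z \<and> z < b)) \<Longrightarrow>
      \<exists>B0 C0 s. B0 \<in> P \<and> C0 \<in> P \<and> card B0 = b \<and> card C0 = a \<and> StdSw B0 C0 s \<and> s \<in> G"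
    and HypE: "\<And>s. s \<in> Zs \<Longrightarrow> 2 \<le> s \<Longrightarrow> s - 1 \<notin> Zs \<Longrightarrow>
      \<exists>B0\<in>P. card B0 = s \<and> (\<exists>x y. x \<in> B0 \<and> y \<in> B0 \<and> x \<noteq> y \<and> ecol x y \<in> G)"
begin

lemma sw_sym:
  assumes "B \<inter> C = {}" shows "sw B C u v = sw C B v u"
  unfolding sw_def using assms by (intro ext) auto

lemma LBk:
  assumes "B \<in> P" shows "\<And>h. h ` B \<subseteq> B \<Longrightarrow> loc B h \<in> G"
proof -
  fix h assume h: "h ` B \<subseteq> B"
  show "loc B h \<in> G"
    by (rule loc_block[OF _ _ assms h]) (fact HypSw, fact HypE)
qed

lemma pair_all:
  assumes B: "B \<in> P" and C: "C \<in> P" and BC: "B \<noteq> C" and u: "u ` B \<subseteq> C" and v: "v ` C \<subseteq> B"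
  shows "sw B C u v \<in> G"
proof (cases "card C \<le> card B")
  case True
  then obtain s where s: "s \<in> G" "StdSw B C s" using std_all[OF HypSw B C BC] by blast
  show ?thesis using U3[OF s(2) s(1) LBk[OF B] u v] by blast
next
  case False
  hence "card B \<le> card C" by simp
  moreover have "C \<noteq> B" using BC by simp
  ultimately obtain s where s: "s \<in> G" "StdSw C B s" using std_all[OF HypSw C B] by blast
  have "sw C B v u \<in> G" using U3[OF s(2) s(1) LBk[OF C] v u] by blast
  moreover have "B \<inter> C = {}" using P_disj B C BC by blast
  ultimately show ?thesis using sw_sym by metis
qed


definition mvb :: "('a \<Rightarrow> 'a) \<Rightarrow> 'a set set" where
  "mvb f = {D \<in> P. \<exists>x\<in>D. f x \<noteq> x}"

lemma all_Sig: "f \<in> Sigmapart X P \<Longrightarrow> f \<in> G"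
proof (induction "card (mvb f)" arbitrary: f rule: less_induct)
  case less
  have fS: "f \<in> Sigmapart X P" using less.prems .
  have T: "f \<in> Tpart X P" using fS Sig_T by blast
  have fe: "f \<in> X \<rightarrow>\<^sub>E X" using T_ext[OF T] .
  have finM: "finite (mvb f)" unfolding mvb_def using finP by simp
  show ?case
  proof (cases "mvb f = {}")
    case True
    have id: "\<And>z. z \<in> X \<Longrightarrow> f z = z"
    proof -
      fix z assume z: "z \<in> X"
      have "blk z \<notin> mvb f" using True by blast
      thus "f z = z" using blk_in[OF z] unfolding mvb_def by blast
    qed
    have "inj_on f X" by (rule inj_onI) (simp add: id)
    thus ?thesis using Sig_inj_S fS SG by blast
  next
    case nonemp: False
    show ?thesis
    proof (cases "\<exists>D\<in>mvb f. f ` D \<subseteq> D")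
      case True
      then obtain D where D: "D \<in> mvb f" "f ` D \<subseteq> D" by blast
      have DP: "D \<in> P" using D unfolding mvb_def by blast
      have DX: "D \<subseteq> X" using P_sub DP by blast
      define g where "g = restrict (\<lambda>z. if z \<in> D then z else f z) X"
      have k: "loc D f \<in> G" using LBk[OF DP D(2)] .
      have gS: "g \<in> Sigmapart X P"
      proof (rule mkSig)
        show "g \<in> X \<rightarrow>\<^sub>E X" unfolding g_def using fe by (auto simp: PiE_def Pi_def)
        show "\<exists>E'\<in>P. g ` E \<subseteq> E'" if E: "E \<in> P" for E
        proof (cases "E = D")
          case True
          have "g ` E \<subseteq> E" using True DX unfolding g_def by auto
          thus ?thesis using E by blast
        next
          case False
          hence dj: "E \<inter> D = {}" using P_disj E DP by blast
          obtain C where C: "C \<in> P" "f ` E \<subseteq> C" using T E unfolding Tpart_def by blast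
          have "g ` E \<subseteq> C" using C dj P_sub[OF E] unfolding g_def by auto
          thus ?thesis using C by blast
        qed
        show "\<exists>z\<in>X. g z \<in> F" if F: "F \<in> P" for F
        proof (cases "F = D")
          case True
          obtain d where d: "d \<in> D" using P_ne DP by blast
          hence "g d = d" "d \<in> X" using DX unfolding g_def by auto
          thus ?thesis using True d by metis
        next
          case False
          hence dj: "F \<inter> D = {}" using P_disj F DP by blast
          obtain x where x: "x \<in> X" "f x \<in> F" using Sig_meets fS F by blast
          have "x \<notin> D" using x D(2) dj by blast
          hence "g x = f x" using x unfolding g_def by simp
          thus ?thesis using x by metis
        qed
      qed
      have "mvb g \<subseteq> mvb f - {D}"
      proof
        fix E assume "E \<in> mvb g"
        then obtain x where E: "E \<in> P" "x \<in> E" "g x \<noteq> x" unfolding mvb_def by blast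
        have xX: "x \<in> X" using E P_sub by blast
        have "x \<notin> D" using E xX unfolding g_def by auto
        hence "E \<noteq> D" using E by blast
        moreover have "f x \<noteq> x" using E xX \<open>x \<notin> D\<close> unfolding g_def by simp
        ultimately show "E \<in> mvb f - {D}" using E unfolding mvb_def by blast
      qed
      hence "card (mvb g) \<le> card (mvb f - {D})" using finM by (intro card_mono) auto
      moreover have "card (mvb f - {D}) < card (mvb f)" using finM D(1) by (rule card_Diff1_less)
      ultimately have "card (mvb g) < card (mvb f)" by linarith
      hence IH: "g \<in> G" using less.hyps gS by blast
      have "f = compose X g (loc D f)"
      proof (rule fun_eqX)
        show "f \<in> extensional X" using fe by (simp add: PiE_def)
        show "compose X g (loc D f) \<in> extensional X" by simp
        fix z assume z: "z \<in> X"
        show "f z = compose X g (loc D f) z"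
        proof (cases "z \<in> D")
          case True
          have "f z \<in> D" "f z \<in> X" using True D(2) DX by auto
          thus ?thesis using z True unfolding g_def by (simp add: compose_eq loc_in)
        next
          case False thus ?thesis using z unfolding g_def by (simp add: compose_eq loc_out)
        qed
      qed
      thus ?thesis using cG[OF IH k] by simp
    next
      case False
      have shift: "\<not> f ` D \<subseteq> D" if "D \<in> mvb f" for D using False that by blast
      obtain B where B: "B \<in> mvb f" "\<forall>D\<in>mvb f. card D \<le> card B"
      proof -
        have "Max (card ` mvb f) \<in> card ` mvb f" using finM nonemp by simp
        then obtain B where "B \<in> mvb f" "card B = Max (card ` mvb f)" by (metis imageE)
        moreover have "\<forall>D\<in>mvb f. card D \<le> Max (card ` mvb f)" using finM by simp
        ultimately show ?thesis using that by metis
      qed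
      have BP: "B \<in> P" using B unfolding mvb_def by blast
      have BX: "B \<subseteq> X" using P_sub BP by blast
      obtain b0 where b0: "b0 \<in> B" using P_ne BP by blast
      have b0X: "b0 \<in> X" using b0 BX by blast
      define C where "C = blk (f b0)"
      have CP: "C \<in> P" unfolding C_def using blkP tpart_X[OF T b0X] by blast
      have CX: "C \<subseteq> X" using P_sub CP by blast
      have fB: "f ` B \<subseteq> C" unfolding C_def using tpart_blk[OF T b0X] blk_eq[OF BP b0] by blast
      have BC: "B \<noteq> C" using fB shift[OF B(1)] by blast
      have dj: "B \<inter> C = {}" using P_disj BP CP BC by blast
      have CM: "C \<in> mvb f"
      proof (rule ccontr)
        assume "C \<notin> mvb f"
        hence fixC: "\<forall>x\<in>C. f x = x" using CP unfolding mvb_def by blast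
        obtain c where c: "c \<in> C" using P_ne CP by blast
        have "f c = c" using fixC c by blast
        hence "blk (f c) = C" using blk_eq[OF CP c] by simp
        hence "blk (f b0) = blk (f c)" unfolding C_def by simp
        hence "B = C" using Sig_blocks_inj[OF fS BP b0 CP c] by blast
        thus False using BC by blast
      qed
      have cle: "card C \<le> card B" using B CM by blast
      obtain \<iota> where i: "\<iota> ` C \<subseteq> B" "inj_on \<iota> C" using card_le_inj[OF P_fin[OF CP] P_fin[OF BP] cle] by blast
      obtain c0 where c0: "c0 \<in> C" using P_ne CP by blast
      have c0X: "c0 \<in> X" using c0 CX by blast
      have kG: "sw B C f \<iota> \<in> G" using pair_all[OF BP CP BC fB i(1)] .
      define g where "g = restrict (\<lambda>z. if z \<in> C then z else if z \<in> B then
          (if z \<in> \<iota> ` C then f (inv_into C \<iota> z) else f c0) else f z) X"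
      have g_C: "g z = z" if "z \<in> C" for z using that CX unfolding g_def by auto
      have g_B: "g z = (if z \<in> \<iota> ` C then f (inv_into C \<iota> z) else f c0)" if "z \<in> B" for z
        using that BX dj unfolding g_def by auto
      have g_O: "g z = f z" if "z \<in> X" "z \<notin> B" "z \<notin> C" for z using that unfolding g_def by auto
      have fX: "\<And>z. z \<in> X \<Longrightarrow> f z \<in> X" using tpart_X[OF T] .
      have gS: "g \<in> Sigmapart X P"
      proof (rule mkSig)
        have "g z \<in> X" if z: "z \<in> X" for z
        proof -
          consider "z \<in> C" | "z \<in> B" | "z \<notin> B" "z \<notin> C" by blast
          thus ?thesis
          proof cases
            case 1 thus ?thesis using g_C z by simp
          next
            case 2
            have "inv_into C \<iota> z \<in> X" if "z \<in> \<iota> ` C" using that CX inv_into_into[of z \<iota> C] by blast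
            thus ?thesis using g_B[OF 2] fX[OF c0X] fX by (cases "z \<in> \<iota> ` C") simp_all
          next
            case 3 thus ?thesis using g_O z fX by simp
          qed
        qed
        moreover have "g \<in> extensional X" unfolding g_def by simp
        ultimately show "g \<in> X \<rightarrow>\<^sub>E X" by (auto simp: PiE_def Pi_def)
        show "\<exists>E\<in>P. g ` D \<subseteq> E" if D: "D \<in> P" for D
        proof -
          consider "D = C" | "D = B" | "D \<noteq> B" "D \<noteq> C" by blast
          thus ?thesis
          proof cases
            case 1
            have "g ` C \<subseteq> C"
            proof
              fix w assume "w \<in> g ` C"
              then obtain z where "z \<in> C" "w = g z" by blast
              thus "w \<in> C" using g_C by simp
            qed
            thus ?thesis using 1 CP by blast
          next
            case 2
            have "g ` B \<subseteq> blk (f c0)"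
            proof
              fix w assume "w \<in> g ` B"
              then obtain z where z: "z \<in> B" "w = g z" by blast
              show "w \<in> blk (f c0)"
              proof (cases "z \<in> \<iota> ` C")
                case True
                have iv: "inv_into C \<iota> z \<in> C" using True inv_into_into[of z \<iota> C] by blast
                hence "inv_into C \<iota> z \<in> blk c0" using blk_eq[OF CP c0] by simp
                hence "f (inv_into C \<iota> z) \<in> blk (f c0)" using tpart_blk[OF T c0X] by blast
                thus ?thesis using g_B[OF z(1)] True z(2) by simp
              next
                case False
                hence "w = f c0" using g_B[OF z(1)] z(2) by simp
                thus ?thesis using blk_self[OF fX[OF c0X]] by simp
              qed
            qed
            thus ?thesis using 2 blkP[OF fX[OF c0X]] by blast
          next
            case 3
            hence "D \<inter> B = {}" "D \<inter> C = {}" using P_disj D BP CP by auto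
            moreover obtain E where E: "E \<in> P" "f ` D \<subseteq> E" using T D unfolding Tpart_def by blast
            ultimately have "g ` D \<subseteq> E"
            proof -
              assume a: "D \<inter> B = {}" "D \<inter> C = {}" and E: "E \<in> P" "f ` D \<subseteq> E"
              show "g ` D \<subseteq> E"
              proof
                fix w assume "w \<in> g ` D"
                then obtain z where z: "z \<in> D" "w = g z" by blast
                have "z \<in> X" "z \<notin> B" "z \<notin> C" using z a P_sub[OF D] by auto
                hence "w = f z" using g_O z(2) by simp
                thus "w \<in> E" using E z by blast
              qed
            qed
            thus ?thesis using E by blast
          qed
        qed
        show "\<exists>z\<in>X. g z \<in> F" if F: "F \<in> P" for F
        proof (cases "F = C")
          case True
          have "g c0 \<in> F" using g_C[OF c0] c0 True by simp
          thus ?thesis using c0X by blast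
        next
          case False
          hence djF: "F \<inter> C = {}" using P_disj F CP by blast
          obtain x where x: "x \<in> X" "f x \<in> F" using Sig_meets fS F by blast
          have xB: "x \<notin> B" using x fB djF by blast
          show ?thesis
          proof (cases "x \<in> C")
            case True
            have ix: "\<iota> x \<in> B" "\<iota> x \<in> X" using i True BX by auto
            have "g (\<iota> x) = f x" using g_B[OF ix(1)] True i(2) by (simp add: inv_into_f_f)
            hence "g (\<iota> x) \<in> F" using x by simp
            thus ?thesis using ix by blast
          next
            case False
            hence "g x \<in> F" using g_O[OF x(1) xB False] x by simp
            thus ?thesis using x by blast
          qed
        qed
      qed
      have "mvb g \<subseteq> mvb f - {C}"
      proof
        fix E assume "E \<in> mvb g"
        then obtain x where E: "E \<in> P" "x \<in> E" "g x \<noteq> x" unfolding mvb_def by blast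
        have xX: "x \<in> X" using E P_sub by blast
        have "x \<notin> C" using E g_C by auto
        hence EC: "E \<noteq> C" using E by blast
        show "E \<in> mvb f - {C}"
        proof (cases "E = B")
          case True thus ?thesis using B EC by blast
        next
          case False
          hence "x \<notin> B" using E BP P_disj by blast
          hence "f x \<noteq> x" using g_O xX \<open>x \<notin> C\<close> E by simp
          thus ?thesis using E EC unfolding mvb_def by blast
        qed
      qed
      hence "card (mvb g) \<le> card (mvb f - {C})" using finM by (intro card_mono) auto
      moreover have "card (mvb f - {C}) < card (mvb f)" using finM CM by (rule card_Diff1_less)
      ultimately have "card (mvb g) < card (mvb f)" by linarith
      hence IH: "g \<in> G" using less.hyps gS by blast
      have "f = compose X g (sw B C f \<iota>)"
      proof (rule fun_eqX)
        show "f \<in> extensional X" using fe by (simp add: PiE_def)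
        show "compose X g (sw B C f \<iota>) \<in> extensional X" by simp
        fix z assume z: "z \<in> X"
        consider "z \<in> B" | "z \<in> C" | "z \<notin> B" "z \<notin> C" by blast
        thus "f z = compose X g (sw B C f \<iota>) z"
        proof cases
          case 1
          have "f z \<in> C" using fB 1 by blast
          thus ?thesis using z 1 sw_B g_C by (simp add: compose_eq)
        next
          case 2
          have nb: "z \<notin> B" using 2 dj by blast
          have "\<iota> z \<in> B" using i 2 by blast
          hence "g (\<iota> z) = f z" using g_B 2 i(2) by (simp add: inv_into_f_f)
          thus ?thesis using z 2 nb sw_C by (simp add: compose_eq)
        next
          case 3 thus ?thesis using z sw_O g_O by (simp add: compose_eq)
        qed
      qed
      thus ?thesis using cG[OF IH kG] by simp
    qed
  qed
qed

end

end

lemma Zs_pos: "s \<in> Zs \<Longrightarrow> 1 \<le> s"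
  unfolding Zs_def using P_ne P_fin by (auto simp: Suc_le_eq card_gt_0_iff)

lemma std_ex2:
  assumes "a \<in> Zs" "b \<in> Zs" "a < b"
  shows "\<exists>f B C. B \<in> P \<and> C \<in> P \<and> card B = b \<and> card C = a \<and> StdSw B C f"
proof -
  obtain B where B: "B \<in> P" "card B = b" using exB assms by blast
  obtain C where C: "C \<in> P" "card C = a" using exB assms by blast
  have "B \<noteq> C" using B C assms by auto
  then obtain f where "StdSw B C f" using Std_exists B C assms by fastforce
  thus ?thesis using B C by blast
qed

lemma upper:
  "\<exists>W0. W0 \<subseteq> Sigmapart X P \<and> finite W0 \<and> card W0 \<le> card S1 + card Ls
     \<and> gen_sg X (Spart X P \<union> W0) = Sigmapart X P"
proof -
  define w1 where "w1 s = (if s - 1 \<in> Zs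
     then (SOME f. \<exists>B C. B \<in> P \<and> C \<in> P \<and> card B = s \<and> card C = s - 1 \<and> StdSw B C f)
     else (SOME f. \<exists>B\<in>P. card B = s \<and> (\<exists>x y. x \<in> B \<and> y \<in> B \<and> x \<noteq> y \<and> f = ecol x y)))" for s
  define w2 where "w2 b = (SOME f. \<exists>B C. B \<in> P \<and> C \<in> P \<and> card B = b \<and> card C = amax b \<and> StdSw B C f)" for b
  have w1a: "\<exists>B C. B \<in> P \<and> C \<in> P \<and> card B = s \<and> card C = s - 1 \<and> StdSw B C (w1 s)"
    if "s \<in> S1" "s - 1 \<in> Zs" for s
  proof -
    have "s \<in> Zs" "s - 1 < s" using that unfolding S1_def by auto
    hence "\<exists>f B C. B \<in> P \<and> C \<in> P \<and> card B = s \<and> card C = s - 1 \<and> StdSw B C f"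
      using std_ex2 that(2) by blast
    hence "\<exists>f. \<exists>B C. B \<in> P \<and> C \<in> P \<and> card B = s \<and> card C = s - 1 \<and> StdSw B C f" by blast
    from someI_ex[OF this] show ?thesis unfolding w1_def using that(2) by simp
  qed
  have w1b: "\<exists>B\<in>P. card B = s \<and> (\<exists>x y. x \<in> B \<and> y \<in> B \<and> x \<noteq> y \<and> w1 s = ecol x y)"
    if hs: "s \<in> S1" "s - 1 \<notin> Zs" for s
  proof -
    have "s \<in> Zs" using hs unfolding S1_def by simp
    then obtain B where B: "B \<in> P" "card B = s" using exB by blast
    have "2 \<le> card B" using B hs unfolding S1_def by simp
    then obtain x y where "x \<in> B" "y \<in> B" "x \<noteq> y" using two_in[OF P_fin[OF B(1)]] by blast
    hence "\<exists>f. \<exists>B\<in>P. card B = s \<and> (\<exists>x y. x \<in> B \<and> y \<in> B \<and> x \<noteq> y \<and> f = ecol x y)" using B by blast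
    from someI_ex[OF this] show ?thesis unfolding w1_def using hs(2) by simp
  qed
  have w2a: "\<exists>B C. B \<in> P \<and> C \<in> P \<and> card B = b \<and> card C = amax b \<and> StdSw B C (w2 b)"
    if "b \<in> Ls" for b
  proof -
    have "b \<in> Zs" using that unfolding Ls_def by simp
    hence "\<exists>f B C. B \<in> P \<and> C \<in> P \<and> card B = b \<and> card C = amax b \<and> StdSw B C f"
      using std_ex2 amax(1,2)[OF that] by blast
    hence "\<exists>f. \<exists>B C. B \<in> P \<and> C \<in> P \<and> card B = b \<and> card C = amax b \<and> StdSw B C f" by blast
    from someI_ex[OF this] show ?thesis unfolding w2_def by simp
  qed
  define W0 where "W0 = w1 ` S1 \<union> w2 ` Ls"
  have finS1: "finite S1" unfolding S1_def using finZ by simp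
  have finL: "finite Ls" unfolding Ls_def using finZ by simp
  have W0S: "W0 \<subseteq> Sigmapart X P"
  proof
    fix f assume "f \<in> W0"
    then consider s where "s \<in> S1" "f = w1 s" | b where "b \<in> Ls" "f = w2 b" unfolding W0_def by blast
    thus "f \<in> Sigmapart X P"
    proof cases
      case (1 s)
      show ?thesis
      proof (cases "s - 1 \<in> Zs")
        case True thus ?thesis using w1a[OF 1(1) True] 1 Std_Sig by blast
      next
        case False
        then obtain B x y where "B \<in> P" "x \<in> B" "y \<in> B" "w1 s = ecol x y" using w1b[OF 1(1)] by blast
        thus ?thesis using 1(2) ecol_Sig by simp
      qed
    next
      case (2 b) thus ?thesis using w2a[OF 2(1)] Std_Sig by blast
    qed
  qed
  have finW: "finite W0" unfolding W0_def using finS1 finL by simp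
  have cW: "card W0 \<le> card S1 + card Ls"
  proof -
    have "card W0 \<le> card (w1 ` S1) + card (w2 ` Ls)" unfolding W0_def by (rule card_Un_le)
    also have "\<dots> \<le> card S1 + card Ls" using card_image_le finS1 finL by (metis add_mono)
    finally show ?thesis .
  qed
  define G where "G = gen_sg X (Spart X P \<union> W0)"
  have SG: "Spart X P \<subseteq> G" unfolding G_def by (auto intro: gen_sg.base)
  have cG: "\<And>a b. a \<in> G \<Longrightarrow> b \<in> G \<Longrightarrow> compose X a b \<in> G" unfolding G_def by (rule gen_sg.comp)
  have WG: "W0 \<subseteq> G" unfolding G_def by (auto intro: gen_sg.base)
  have HypSw: "\<exists>B0 C0 s. B0 \<in> P \<and> C0 \<in> P \<and> card B0 = b \<and> card C0 = a \<and> StdSw B0 C0 s \<and> s \<in> G"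
    if ab: "a \<in> Zs" "b \<in> Zs" "a < b" "\<forall>z\<in>Zs. \<not> (a < z \<and> z < b)" for a b
  proof (cases "a = b - 1")
    case True
    have "b \<in> S1" using ab Zs_pos[OF ab(1)] unfolding S1_def by simp
    moreover have "b - 1 \<in> Zs" using True ab by simp
    ultimately obtain B C where "B \<in> P" "C \<in> P" "card B = b" "card C = a" "StdSw B C (w1 b)"
      using w1a True by blast
    moreover have "w1 b \<in> G" using WG \<open>b \<in> S1\<close> unfolding W0_def by blast
    ultimately show ?thesis by blast
  next
    case False
    have bL: "b \<in> Ls" unfolding Ls_def using ab False Zs_pos[OF ab(1)] by auto
    have "amax b = a"
    proof -
      have "a \<le> amax b" using amax(4)[OF bL ab(1) ab(3)] .
      moreover have "\<not> a < amax b" using ab(4) amax(1,2)[OF bL] by blast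
      ultimately show ?thesis by simp
    qed
    then obtain B C where "B \<in> P" "C \<in> P" "card B = b" "card C = a" "StdSw B C (w2 b)"
      using w2a[OF bL] by metis
    moreover have "w2 b \<in> G" using WG bL unfolding W0_def by blast
    ultimately show ?thesis by blast
  qed
  have HypE: "\<exists>B0\<in>P. card B0 = s \<and> (\<exists>x y. x \<in> B0 \<and> y \<in> B0 \<and> x \<noteq> y \<and> ecol x y \<in> G)"
    if s: "s \<in> Zs" "2 \<le> s" "s - 1 \<notin> Zs" for s
  proof -
    have sS: "s \<in> S1" using s unfolding S1_def by simp
    have "w1 s \<in> G" using WG sS unfolding W0_def by blast
    thus ?thesis using w1b[OF sS s(3)] by metis
  qed
  have "Sigmapart X P \<subseteq> G"
  proof
    fix f assume f: "f \<in> Sigmapart X P"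
    show "f \<in> G" by (rule all_Sig[OF SG cG HypSw HypE f])
  qed
  moreover have "G \<subseteq> Sigmapart X P" unfolding G_def using gen_sub W0S S_Sig by blast
  ultimately have "G = Sigmapart X P" by blast
  thus ?thesis using W0S finW cW unfolding G_def by blast
qed

lemma rank_eq: "rel_rank X (Sigmapart X P) (Spart X P) = card S1 + card Ls"
proof -
  obtain W0 where W0: "W0 \<subseteq> Sigmapart X P" "finite W0" "card W0 \<le> card S1 + card Ls"
    "gen_sg X (Spart X P \<union> W0) = Sigmapart X P" using upper by blast
  have "card S1 + card Ls \<le> card W0" using lower[OF W0(1,2,4)] .
  hence c: "card W0 = card S1 + card Ls" using W0(3) by simp
  show ?thesis unfolding rel_rank_def
  proof (rule Least_equality)
    show "\<exists>W. W \<subseteq> Sigmapart X P \<and> finite W \<and> card W = card S1 + card Ls \<and> gen_sg X (Spart X P \<union> W) = Sigmapart X P"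
      using W0 c by blast
    fix n assume "\<exists>W. W \<subseteq> Sigmapart X P \<and> finite W \<and> card W = n \<and> gen_sg X (Spart X P \<union> W) = Sigmapart X P"
    thus "card S1 + card Ls \<le> n" using lower by blast
  qed
qed

end

theorem corollary4p7:
  fixes X :: "'a set" and P :: "'a set set"
    and p q t :: nat and n m lsz :: "nat \<Rightarrow> nat"
  assumes "finite X" "X \<noteq> {}" "partition_on X P"
    and "\<forall>i<p. n i \<ge> 2 \<and> m i \<ge> 2" "inj_on n {..<p}"
    and "\<forall>i<q. lsz i \<ge> 2" "inj_on lsz {..<q}"
    and "n ` {..<p} \<inter> lsz ` {..<q} = {}"
    and "\<forall>i<p. card {B \<in> P. card B = n i} = m i"
    and "\<forall>i<q. card {B \<in> P. card B = lsz i} = 1"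
    and "card {B \<in> P. card B = 1} = t"
    and "\<forall>B\<in>P. card B = 1 \<or> card B \<in> n ` {..<p} \<or> card B \<in> lsz ` {..<q}"
  shows "rel_rank X (Sigmapart X P) (Spart X P)
    = p + q + (if t = 0 then 0 else 1) - 1
      + card {s::nat. s \<ge> 2 \<and> (\<exists>B\<in>P. card B = s) \<and> \<not> (\<exists>B\<in>P. card B = s - 1)}"
proof -
  interpret PT X P using assms(1,3) by unfold_locales
  have Zmem: "(\<exists>B\<in>P. card B = s) \<longleftrightarrow> s \<in> Zs" for s unfolding Zs_def image_iff by (simp add: eq_commute)
  define lset where "lset = {s::nat. 2 \<le> s \<and> s \<in> Zs \<and> s - 1 \<notin> Zs}"
  have lset_eq: "{s::nat. s \<ge> 2 \<and> (\<exists>B\<in>P. card B = s) \<and> \<not> (\<exists>B\<in>P. card B = s - 1)} = lset"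
    unfolding lset_def
  proof (rule Collect_cong)
    fix s :: nat
    show "(s \<ge> 2 \<and> (\<exists>B\<in>P. card B = s) \<and> \<not> (\<exists>B\<in>P. card B = s - 1)) = (2 \<le> s \<and> s \<in> Zs \<and> s - 1 \<notin> Zs)"
      using Zmem[of s] Zmem[of "s - 1"] by simp
  qed
  have nonemp: "{B \<in> P. card B = c} \<noteq> {} \<Longrightarrow> c \<in> Zs" for c
  proof -
    assume "{B \<in> P. card B = c} \<noteq> {}"
    then obtain B where "B \<in> P" "card B = c" by blast
    thus "c \<in> Zs" unfolding Zs_def by (metis imageI)
  qed
  have finPc: "finite {B \<in> P. card B = c}" for c using finP by simp
  have one: "1 \<in> Zs \<longleftrightarrow> t \<noteq> 0"
  proof
    assume "1 \<in> Zs"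
    hence "1 \<in> card ` P" unfolding Zs_def .
    then obtain B where B: "B \<in> P" "1 = card B" by (rule imageE)
    hence "B \<in> {B \<in> P. card B = 1}" by simp
    hence "{B \<in> P. card B = 1} \<noteq> {}" by (rule ex_in_conv[THEN iffD1, OF exI])
    hence "card {B \<in> P. card B = 1} \<noteq> 0" using finPc[of 1] card_0_eq by blast
    thus "t \<noteq> 0" using assms(11) by argo
  next
    assume t0: "t \<noteq> 0"
    have "card {B \<in> P. card B = 1} \<noteq> 0" using assms(11) t0 by argo
    hence "{B \<in> P. card B = 1} \<noteq> {}" by (metis card.empty)
    thus "1 \<in> Zs" by (rule nonemp)
  qed
  define A1 where "A1 = n ` {..<p}"
  define A2 where "A2 = lsz ` {..<q}"
  have A1Z: "A1 \<subseteq> Zs"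
  proof
    fix c assume "c \<in> A1"
    then obtain i where i: "i < p" "c = n i" unfolding A1_def by blast
    hence "card {B \<in> P. card B = c} \<noteq> 0" using assms(4,9) by auto
    hence "{B \<in> P. card B = c} \<noteq> {}" by (metis card.empty)
    thus "c \<in> Zs" using nonemp by blast
  qed
  have A2Z: "A2 \<subseteq> Zs"
  proof
    fix c assume "c \<in> A2"
    then obtain i where i: "i < q" "c = lsz i" unfolding A2_def by blast
    hence "card {B \<in> P. card B = c} \<noteq> 0" using assms(10) by auto
    hence "{B \<in> P. card B = c} \<noteq> {}" by (metis card.empty)
    thus "c \<in> Zs" using nonemp by blast
  qed
  have ZA: "Zs \<subseteq> A1 \<union> A2 \<union> (if t = 0 then {} else {1})"
  proof
    fix c assume "c \<in> Zs"
    hence "c \<in> card ` P" unfolding Zs_def .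
    then obtain B where B: "B \<in> P" "c = card B" by (rule imageE)
    show "c \<in> A1 \<union> A2 \<union> (if t = 0 then {} else {1})"
    proof (cases "c = 1")
      case True thus ?thesis using one \<open>c \<in> Zs\<close> by auto
    next
      case False
      have "card B = 1 \<or> card B \<in> n ` {..<p} \<or> card B \<in> lsz ` {..<q}" using assms(12) B(1) by blast
      hence "c \<in> A1 \<or> c \<in> A2" using False B(2) unfolding A1_def A2_def by simp
      thus ?thesis by blast
    qed
  qed
  have Zeq: "Zs = A1 \<union> A2 \<union> (if t = 0 then {} else {1})"
  proof (rule equalityI)
    show "Zs \<subseteq> A1 \<union> A2 \<union> (if t = 0 then {} else {1})" by (rule ZA)
    show "A1 \<union> A2 \<union> (if t = 0 then {} else {1}) \<subseteq> Zs"
      using A1Z A2Z one by (cases "t = 0") simp_all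
  qed
  have A1ge: "\<forall>c\<in>A1. 2 \<le> c" using assms(4) unfolding A1_def by auto
  have A2ge: "\<forall>c\<in>A2. 2 \<le> c" using assms(6) unfolding A2_def by auto
  have cA1: "card A1 = p" unfolding A1_def using card_image[OF assms(5)] by simp
  have cA2: "card A2 = q" unfolding A2_def using card_image[OF assms(7)] by simp
  have dA: "A1 \<inter> A2 = {}" using assms(8) unfolding A1_def A2_def .
  have finA: "finite A1" "finite A2" unfolding A1_def A2_def by auto
  have cA12: "card (A1 \<union> A2) = p + q" using card_Un_disjoint[OF finA dA] cA1 cA2 by simp
  have S1eq: "S1 = A1 \<union> A2" unfolding S1_def Zeq using A1ge A2ge by (cases "t = 0") auto
  have cS1: "card S1 = p + q" using S1eq cA12 by simp
  have Zne: "Zs \<noteq> {}"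
  proof -
    obtain x where "x \<in> X" using assms(2) by blast
    thus ?thesis using bs_Z by blast
  qed
  have rk: "rel_rank X (Sigmapart X P) (Spart X P) = card S1 + card Ls" by (rule rank_eq)
  show ?thesis
  proof (cases "t = 0")
    case False
    have h1: "1 \<in> Zs" using one False by simp
    have "\<forall>b::nat. 2 \<le> b \<longrightarrow> (\<exists>z\<in>Zs. z < b)" using h1 by force
    hence "Ls = lset" unfolding Ls_def lset_def by auto
    thus ?thesis using rk cS1 lset_eq False by simp
  next
    case True
    have Zge: "\<forall>c\<in>Zs. 2 \<le> c" using Zeq True A1ge A2ge by auto
    define m0 where "m0 = Min Zs"
    have m0Z: "m0 \<in> Zs" unfolding m0_def using finZ Zne by simp
    have m0le: "\<forall>c\<in>Zs. m0 \<le> c" unfolding m0_def using finZ by simp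
    have m0l: "m0 \<in> lset"
    proof -
      have m2: "m0 \<ge> 2" using Zge m0Z by blast
      have "m0 - 1 \<notin> Zs"
      proof
        assume "m0 - 1 \<in> Zs"
        hence "m0 \<le> m0 - 1" using m0le by blast
        thus False using m2 by simp
      qed
      thus ?thesis unfolding lset_def using m0Z Zge by blast
    qed
    have m0L: "m0 \<notin> Ls"
    proof
      assume "m0 \<in> Ls"
      then obtain z where "z \<in> Zs" "z < m0" unfolding Ls_def by blast
      thus False using m0le by force
    qed
    have "lset = insert m0 Ls"
    proof
      show "insert m0 Ls \<subseteq> lset" using m0l unfolding Ls_def lset_def by blast
      show "lset \<subseteq> insert m0 Ls"
      proof
        fix b assume b: "b \<in> lset"
        show "b \<in> insert m0 Ls"
        proof (cases "b = m0")
          case True thus ?thesis by simp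
        next
          case False
          have "b \<in> Zs" using b unfolding lset_def by simp
          hence "m0 \<le> b" using m0le by blast
          hence "m0 < b" using False by simp
          thus ?thesis using b m0Z unfolding lset_def Ls_def by blast
        qed
      qed
    qed
    moreover have "finite Ls" unfolding Ls_def using finZ by simp
    ultimately have cl: "card lset = card Ls + 1" using m0L by simp
    have "p + q \<ge> 1"
    proof -
      have "card Zs \<noteq> 0" using Zne finZ by simp
      hence "card (A1 \<union> A2) \<noteq> 0" using Zeq True by simp
      thus ?thesis using cA12 by linarith
    qed
    thus ?thesis using rk cS1 lset_eq True cl by simp
  qed
qed

end
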